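(* Let $\nu\geq3$ be an integer. Let $M=\{u=F\}$ and $M'=\{u'=F'\}$ be rigid real-analytic hypersurfaces in $\mathbb{C}^3$ with $$F=m+G_3+\cdots+G_{\nu-1}+G_\nu+O(\nu+1),\qquad F'=m+G'_3+\cdots+G'_{\nu-1}+G'_\nu+O(\nu+1),$$ where $m=\frac{z\bar z+\frac12z^2\bar\zeta+\frac12\bar z^2\zeta}{1-\zeta\bar\zeta}$ and each $G_\mu,G'_\mu$ is weighted homogeneous of weight $\mu$. Suppose the biholomorphism $$z'=z+f_{\nu-1}(z,\zeta),\qquad\zeta'=\zeta+g_{\nu-2}(z,\zeta),\qquad w'=w+h_\nu(z,\zeta),$$ with $f_{\nu-1},g_{\nu-2},h_\nu$ holomorphic and weighted homogeneous of weights $\nu-1,\nu-2,\nu$ respectively, maps $M$ into $M'$. Then $G'_\mu=G_\mu$ for $3\leq\mu\leq\nu-1$, while $$G'_\nu=G_\nu-2\operatorname{Re}\Big\{\frac{\bar z+z\bar\zeta}{1-\zeta\bar\zeta}f_{\nu-1}(z,\zeta)+\frac{(\bar z+z\bar\zeta)^2}{2(1-\zeta\bar\zeta)^2}g_{\nu-2}(z,\zeta)-\frac12h_\nu(z,\zeta)\Big\},$$ all functions being evaluated at $(z,\zeta,\bar z,\bar\zeta)$.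
   Context: Coordinates on $\mathbb{C}^3$ are $(z,\zeta,w)$, $w=u+iv$. Weights: $[z]=[\bar z]=1$, $[\zeta]=[\bar\zeta]=0$, $[w]=2$; the monomial $z^a\zeta^b\bar z^c\bar\zeta^d$ has weight $a+c$. A convergent power series is weighted homogeneous of weight $\mu$ if all its monomials have weight $\mu$ (e.g. a holomorphic $f_{\mu}(z,\zeta)$ of weight $\mu$ is $z^\mu\phi(\zeta)$). $O(\mu)$ denotes a convergent power series all of whose monomials have weight $\geq\mu$. $2\operatorname{Re}\{X\}=X+\overline{X}$. *)

theory Defs
  imports "HOL-Analysis.Analysis"
begin

text \<open>A formal power series in the four variables z, zeta, conj z, conj zeta is a
  coefficient family c a b p q, standing for the monomial
  z^a zeta^b (conj z)^p (conj zeta)^q.\<close>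

type_synonym coeffs4 = "nat \<Rightarrow> nat \<Rightarrow> nat \<Rightarrow> nat \<Rightarrow> complex"

definition ps_term :: "coeffs4 \<Rightarrow> complex \<Rightarrow> complex \<Rightarrow> nat \<times> nat \<times> nat \<times> nat \<Rightarrow> complex" where
  "ps_term c z \<zeta> = (\<lambda>(a, b, p, q). c a b p q * z ^ a * \<zeta> ^ b * cnj z ^ p * cnj \<zeta> ^ q)"

definition ps_convergent :: "coeffs4 \<Rightarrow> bool" where
  "ps_convergent c \<longleftrightarrow> (\<exists>r>0. \<forall>z \<zeta>. cmod z < r \<longrightarrow> cmod \<zeta> < r \<longrightarrow>
      (\<lambda>k. norm (ps_term c z \<zeta> k)) summable_on UNIV)"

definition ps_eval :: "coeffs4 \<Rightarrow> complex \<Rightarrow> complex \<Rightarrow> complex" where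
  "ps_eval c z \<zeta> = (\<Sum>\<^sub>\<infinity>k. ps_term c z \<zeta> k)"

definition wt_hom :: "nat \<Rightarrow> coeffs4 \<Rightarrow> bool" where
  "wt_hom \<mu> c \<longleftrightarrow> (\<forall>a b p q. c a b p q \<noteq> 0 \<longrightarrow> a + p = \<mu>)"

definition wt_ge :: "nat \<Rightarrow> coeffs4 \<Rightarrow> bool" where
  "wt_ge \<mu> c \<longleftrightarrow> (\<forall>a b p q. c a b p q \<noteq> 0 \<longrightarrow> a + p \<ge> \<mu>)"

definition mfun :: "complex \<Rightarrow> complex \<Rightarrow> complex" where
  "mfun z \<zeta> = (z * cnj z + z^2 * cnj \<zeta> / 2 + cnj z ^ 2 * \<zeta> / 2) / (1 - \<zeta> * cnj \<zeta>)"

definition wt_hom_holo :: "nat \<Rightarrow> (complex \<Rightarrow> complex \<Rightarrow> complex) \<Rightarrow> bool" where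
  "wt_hom_holo \<mu> f \<longleftrightarrow> (\<exists>\<phi>. \<phi> analytic_on {0} \<and> (\<forall>z \<zeta>. f z \<zeta> = z ^ \<mu> * \<phi> \<zeta>))"

definition rigid_expansion :: "nat \<Rightarrow> (complex \<Rightarrow> complex \<Rightarrow> real) \<Rightarrow> (nat \<Rightarrow> coeffs4) \<Rightarrow> coeffs4 \<Rightarrow> bool" where
  "rigid_expansion \<nu> F G R \<longleftrightarrow>
     (\<forall>\<mu>\<in>{3..\<nu>}. wt_hom \<mu> (G \<mu>) \<and> ps_convergent (G \<mu>)) \<and>
     wt_ge (\<nu> + 1) R \<and> ps_convergent R \<and>
     (\<forall>\<^sub>F (z, \<zeta>) in nhds (0, 0).
        complex_of_real (F z \<zeta>) = mfun z \<zeta> + (\<Sum>\<mu>=3..\<nu>. ps_eval (G \<mu>) z \<zeta>) + ps_eval R z \<zeta>)"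

end

theory Submission
  imports Defs
begin

lemma poly_small_zero:
  fixes d :: "nat \<Rightarrow> complex"
  assumes "((\<lambda>t. (\<Sum>k\<le>n. d k * of_real t ^ k) / of_real t ^ n) \<longlongrightarrow> 0) (at_right (0::real))"
  shows "\<forall>k\<le>n. d k = 0"
  using assms
proof (induction n arbitrary: d)
  case 0
  then have "((\<lambda>t::real. d 0) \<longlongrightarrow> 0) (at_right 0)" by simp
  then have "d 0 = 0" using tendsto_const_iff by (metis trivial_limit_at_right_real)
  then show ?case by simp
next
  case (Suc n)
  let ?Q = "\<lambda>t::real. (\<Sum>k\<le>Suc n. d k * of_real t ^ k)"
  have ev: "eventually (\<lambda>t::real. t \<noteq> 0) (at_right 0)"
    by (simp add: eventually_at_right_less eventually_mono[OF eventually_at_right_less])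
  have "((\<lambda>t. ?Q t / of_real t ^ Suc n * of_real t ^ Suc n) \<longlongrightarrow> 0 * 0) (at_right 0)"
    apply (rule tendsto_mult[OF Suc.prems])
    apply (rule tendsto_eq_intros, rule tendsto_eq_intros, rule tendsto_ident_at)
    by auto
  then have "((\<lambda>t. ?Q t / of_real t ^ Suc n * of_real t ^ Suc n) \<longlongrightarrow> 0) (at_right 0)" by (simp only: mult_zero_left)
  then have "(?Q \<longlongrightarrow> 0) (at_right 0)"
    by (rule Lim_transform_eventually) (rule eventually_mono[OF ev], simp)
  moreover have "(?Q \<longlongrightarrow> (\<Sum>k\<le>Suc n. d k * of_real 0 ^ k)) (at_right 0)"
    by (intro tendsto_intros tendsto_ident_at)
  ultimately have "(\<Sum>k\<le>Suc n. d k * of_real 0 ^ k) = (0::complex)"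
    using tendsto_unique trivial_limit_at_right_real by blast
  then have d0: "d 0 = 0"
    by (simp add: sum.atMost_Suc_shift del: sum.atMost_Suc)
  have "((\<lambda>t. (\<Sum>k\<le>n. d (Suc k) * of_real t ^ k) / of_real t ^ n) \<longlongrightarrow> 0) (at_right 0)"
  proof (rule Lim_transform_eventually[OF Suc.prems])
    show "\<forall>\<^sub>F t in at_right 0. ?Q t / of_real t ^ Suc n = (\<Sum>k\<le>n. d (Suc k) * of_real t ^ k) / of_real t ^ n"
    proof (rule eventually_mono[OF ev])
      fix t :: real assume t: "t \<noteq> 0"
      have "?Q t = of_real t * (\<Sum>k\<le>n. d (Suc k) * of_real t ^ k)"
        by (simp add: sum.atMost_Suc_shift d0 sum_distrib_left algebra_simps del: sum.atMost_Suc)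
      then show "?Q t / of_real t ^ Suc n = (\<Sum>k\<le>n. d (Suc k) * of_real t ^ k) / of_real t ^ n"
        using t by (simp add: field_simps)
    qed
  qed
  from Suc.IH[OF this] d0 show ?case
    by (metis not0_implies_Suc Suc_le_mono)
qed

lemma infinite_circle: "infinite {v::complex. cmod v = 1}"
proof
  assume fin: "finite {v::complex. cmod v = 1}"
  let ?g = "\<lambda>s::real. Complex s (sqrt (1 - s^2))"
  have "?g ` {0..1} \<subseteq> {v. cmod v = 1}"
  proof
    fix v assume "v \<in> ?g ` {0..1}"
    then obtain s where s: "s \<in> {0..1}" "v = ?g s" by auto
    have "s^2 \<le> 1" using s by (simp add: power_le_one)
    then show "v \<in> {v. cmod v = 1}" using s by (simp add: cmod_def)
  qed
  moreover have "inj_on ?g {0..1}" by (auto simp: inj_on_def)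
  ultimately have "finite {0..(1::real)}"
    using fin finite_subset finite_imageD by metis
  then show False using infinite_Icc[of "0::real" 1] by simp
qed

lemma circ_poly_zero:
  fixes e :: "nat \<Rightarrow> complex"
  assumes "\<delta> > 0" "\<forall>x. cmod x < \<delta> \<longrightarrow> (\<Sum>a\<le>n. e a * x^a * cnj x^(n-a)) = 0"
  shows "\<forall>a\<le>n. e a = 0"
proof -
  define r where "r = \<delta>/2"
  have r: "r > 0" "r < \<delta>" using assms(1) by (auto simp: r_def)
  have roots: "(\<Sum>a\<le>n. e a * v^a) = 0" if v: "cmod v = 1" for v
  proof -
    define u where "u = csqrt v"
    have u1: "cmod u = 1" using v by (simp add: u_def norm_csqrt)
    have uv: "u^2 = v" by (simp add: u_def)
    have uva: "u^a*u^a = v^a" for a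
      by (simp add: uv[symmetric] power_mult[symmetric] power_add[symmetric] mult_2)
    have cu: "cnj u * u = 1"
      using complex_norm_square[of u] u1 by (simp add: mult.commute)
    define x where "x = of_real r * u"
    have "cmod x < \<delta>" using r u1 by (simp add: x_def norm_mult)
    then have 0: "(\<Sum>a\<le>n. e a * x^a * cnj x^(n-a)) = 0" using assms(2) by blast
    have "(\<Sum>a\<le>n. e a * x^a * cnj x^(n-a)) * u^n = of_real r ^ n * (\<Sum>a\<le>n. e a * v^a)"
      unfolding sum_distrib_left sum_distrib_right
    proof (rule sum.cong[OF refl])
      fix a assume "a \<in> {..n}"
      then have an: "a \<le> n" by simp
      have un: "u^n = u^a * u^(n-a)" using an by (simp add: power_add[symmetric])
      have rn: "(of_real r :: complex)^n = of_real r ^ a * of_real r ^ (n-a)" using an by (simp add: power_add[symmetric])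
      have "e a * x^a * cnj x^(n-a) * u^n = e a * of_real r ^ a * of_real r ^ (n-a) * (u^a * u^a) * (cnj u * u)^(n-a)"
        unfolding x_def un by (simp add: power_mult_distrib algebra_simps)
      also have "\<dots> = of_real r ^ n * (e a * v^a)"
        using cu rn uva by (simp add: mult.commute)
      finally show "e a * x^a * cnj x^(n-a) * u^n = of_real r ^ n * (e a * v^a)" .
    qed
    with 0 r show ?thesis by simp
  qed
  have "{v. cmod v = 1} \<subseteq> {v. (\<Sum>a\<le>n. e a * v^a) = 0}" using roots by auto
  then have "infinite {v. (\<Sum>a\<le>n. e a * v^a) = 0}" using infinite_circle finite_subset by blast
  then show ?thesis using polyfun_finite_roots[of e n] by blast
qed

lemma le_all_t_zero:
  fixes x C :: real
  assumes "x \<ge> 0" "C \<ge> 0" "\<And>t. 0 < t \<Longrightarrow> t \<le> 1 \<Longrightarrow> x \<le> t * C"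
  shows "x = 0"
proof (rule ccontr)
  assume "x \<noteq> 0"
  then have xp: "x > 0" using assms(1) by simp
  define t where "t = min 1 (x / (2 * (C + 1)))"
  have t: "0 < t" "t \<le> 1" using xp assms(2) by (auto simp: t_def)
  have "t * C \<le> x / (2 * (C + 1)) * C" using assms(2) by (intro mult_right_mono) (auto simp: t_def)
  also have "\<dots> < x" using xp assms(2) by (simp add: field_simps add_nonneg_pos)
  finally show False using assms(3)[OF t] by simp
qed

lemma abs_sub:
  fixes T :: "'k \<Rightarrow> complex"
  assumes "(\<lambda>k. norm (T k)) summable_on A" "B \<subseteq> A"
  shows "(\<lambda>k. norm (T k)) summable_on B"
  using assms summable_on_subset_banach by blast

lemma graded_zero:
  fixes T :: "'k \<Rightarrow> complex" and w :: "'k \<Rightarrow> nat"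
  assumes summ: "(\<lambda>k. norm (T k)) summable_on A"
    and zero: "\<And>t::real. 0 < t \<Longrightarrow> t \<le> 1 \<Longrightarrow> (\<Sum>\<^sub>\<infinity>k\<in>A. of_real t ^ w k * T k) = 0"
  shows "(\<Sum>\<^sub>\<infinity>k\<in>{k\<in>A. w k = n}. T k) = 0"
proof -
  have sm: "(\<lambda>k. of_real t ^ w k * T k) summable_on B" if "B \<subseteq> A" "0 \<le> t" "t \<le> 1" for B t
  proof (rule abs_summable_summable, rule Infinite_Sum.abs_summable_on_comparison_test)
    show "(\<lambda>k. norm (T k)) summable_on B" using abs_sub[OF summ that(1)] .
    fix k show "norm (of_real t ^ w k * T k) \<le> norm (T k)"
      using that by (simp add: norm_mult norm_power power_le_one mult_left_le_one_le)
  qed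
  define An where "An n = (\<Sum>\<^sub>\<infinity>k\<in>{k\<in>A. w k = n}. T k)" for n
  define C where "C = (\<Sum>\<^sub>\<infinity>k\<in>A. norm (T k))"
  have C0: "C \<ge> 0" unfolding C_def by (simp add: infsum_nonneg)
  have step: "An n = 0" if P: "\<And>t. 0 < t \<Longrightarrow> t \<le> 1 \<Longrightarrow> (\<Sum>\<^sub>\<infinity>k\<in>{k\<in>A. w k < n}. of_real t ^ w k * T k) = 0" for n
  proof -
    have "norm (An n) \<le> t * C" if t: "0 < t" "t \<le> 1" for t
    proof -
      let ?f = "\<lambda>k. of_real t ^ w k * T k"
      let ?L = "{k\<in>A. w k < n}" let ?E = "{k\<in>A. w k = n}" let ?U = "{k\<in>A. w k > n}"
      have AU: "A = ?L \<union> (?E \<union> ?U)" by auto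
      have "0 = (\<Sum>\<^sub>\<infinity>k\<in>A. ?f k)" using zero[OF t] by simp
      also have "\<dots> = (\<Sum>\<^sub>\<infinity>k\<in>?L. ?f k) + ((\<Sum>\<^sub>\<infinity>k\<in>?E. ?f k) + (\<Sum>\<^sub>\<infinity>k\<in>?U. ?f k))"
        apply (subst AU)
        apply (subst infsum_Un_disjoint)
        using t apply (auto intro!: sm summable_on_union)[3]
        apply (subst infsum_Un_disjoint)
        using t by (auto intro!: sm)
      also have "(\<Sum>\<^sub>\<infinity>k\<in>?E. ?f k) = of_real t ^ n * An n"
        unfolding An_def by (subst infsum_cmult_right'[symmetric]) (rule infsum_cong, auto)
      finally have eq: "of_real t ^ n * An n = - (\<Sum>\<^sub>\<infinity>k\<in>?U. ?f k)" using P[OF t] by (simp add: eq_neg_iff_add_eq_0 add.commute)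
      have bnd: "norm (?f k) \<le> t ^ (n+1) * norm (T k)" if "k \<in> ?U" for k
      proof -
        have "t ^ w k \<le> t ^ (n+1)" using that t by (intro power_decreasing) auto
        then show ?thesis using t by (simp add: norm_mult norm_power mult_right_mono)
      qed
      have sU: "(\<lambda>k. norm (T k)) summable_on ?U" by (rule abs_sub[OF summ]) auto
      have "norm (\<Sum>\<^sub>\<infinity>k\<in>?U. ?f k) \<le> (\<Sum>\<^sub>\<infinity>k\<in>?U. norm (?f k))"
        by (rule norm_infsum_bound, rule Infinite_Sum.abs_summable_on_comparison_test[where g=T])
           (use abs_sub[OF summ, of ?U] t in \<open>auto simp: norm_mult norm_power power_le_one mult_left_le_one_le\<close>)
      also have "\<dots> \<le> (\<Sum>\<^sub>\<infinity>k\<in>?U. t^(n+1) * norm (T k))"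
        apply (rule infsum_mono)
          apply (rule Infinite_Sum.abs_summable_on_comparison_test[where g=T])
        using abs_sub[OF summ, of ?U] t apply (auto simp: norm_mult norm_power power_le_one mult_left_le_one_le)[2]
        using sU apply (rule summable_on_cmult_right)
        using bnd by auto
      also have "\<dots> = t^(n+1) * (\<Sum>\<^sub>\<infinity>k\<in>?U. norm (T k))" by (rule infsum_cmult_right')
      also have "\<dots> \<le> t^(n+1) * C"
        unfolding C_def using t
        by (intro mult_left_mono infsum_mono_neutral sU summ) auto
      finally have "t^n * norm (An n) \<le> t^(n+1) * C"
        using arg_cong[OF eq, of norm] t by (simp add: norm_mult norm_power)
      then show ?thesis using t by (simp add: mult.assoc)
    qed
    then have "norm (An n) = 0" using le_all_t_zero[OF norm_ge_zero C0] by blast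
    then show ?thesis by simp
  qed
  have "\<forall>t. 0 < t \<longrightarrow> t \<le> 1 \<longrightarrow> (\<Sum>\<^sub>\<infinity>k\<in>{k\<in>A. w k < n}. of_real t ^ w k * T k) = 0" for n
  proof (induction n)
    case 0 then show ?case by simp
  next
    case (Suc n)
    show ?case
    proof (intro allI impI)
      fix t :: real assume t: "0 < t" "t \<le> 1"
      have "{k\<in>A. w k < Suc n} = {k\<in>A. w k < n} \<union> {k\<in>A. w k = n}" by auto
      then have "(\<Sum>\<^sub>\<infinity>k\<in>{k\<in>A. w k < Suc n}. of_real t ^ w k * T k)
          = (\<Sum>\<^sub>\<infinity>k\<in>{k\<in>A. w k < n}. of_real t ^ w k * T k) + (\<Sum>\<^sub>\<infinity>k\<in>{k\<in>A. w k = n}. of_real t ^ w k * T k)"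
        using t by (simp, subst infsum_Un_disjoint) (auto intro!: sm)
      also have "(\<Sum>\<^sub>\<infinity>k\<in>{k\<in>A. w k = n}. of_real t ^ w k * T k) = of_real t ^ n * An n"
        unfolding An_def by (subst infsum_cmult_right'[symmetric]) (rule infsum_cong, auto)
      finally show "(\<Sum>\<^sub>\<infinity>k\<in>{k\<in>A. w k < Suc n}. of_real t ^ w k * T k) = 0"
        using Suc.IH t step[of n] by auto
    qed
  qed
  then show ?thesis using step[of n] unfolding An_def by blast
qed

definition wz :: "nat \<times> nat \<times> nat \<times> nat \<Rightarrow> nat" where "wz k = (case k of (a,b,p,q) \<Rightarrow> a + p)"
definition wy :: "nat \<times> nat \<times> nat \<times> nat \<Rightarrow> nat" where "wy k = (case k of (a,b,p,q) \<Rightarrow> b + q)"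

lemma ps_term_scale_z: "ps_term c (of_real t * x) y k = of_real t ^ wz k * ps_term c x y k"
  by (cases k) (simp add: ps_term_def wz_def power_mult_distrib power_add algebra_simps)

lemma ps_term_scale_y: "ps_term c x (of_real t * y) k = of_real t ^ wy k * ps_term c x y k"
  by (cases k) (simp add: ps_term_def wy_def power_mult_distrib power_add algebra_simps)

lemma ps_unique:
  assumes conv: "ps_convergent c" and d: "\<delta> > 0"
    and z: "\<And>x y. cmod x < \<delta> \<Longrightarrow> cmod y < \<delta> \<Longrightarrow> ps_eval c x y = 0"
  shows "c a b p q = 0"
proof -
  obtain r where r: "r > 0" "\<And>x y. cmod x < r \<Longrightarrow> cmod y < r \<Longrightarrow> (\<lambda>k. norm (ps_term c x y k)) summable_on UNIV"
    using conv unfolding ps_convergent_def by blast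
  define d' where "d' = min \<delta> r"
  have d': "d' > 0" using d r by (simp add: d'_def)
  have z': "ps_eval c x y = 0" if "cmod x < d'" "cmod y < d'" for x y using z that by (simp add: d'_def)
  have sm: "(\<lambda>k. norm (ps_term c x y k)) summable_on UNIV" if "cmod x < d'" "cmod y < d'" for x y
    using r that by (simp add: d'_def)
  have st1: "(\<Sum>\<^sub>\<infinity>k\<in>{k\<in>UNIV. wz k = n1}. ps_term c x y k) = 0" if xy: "cmod x < d'" "cmod y < d'" for x y n1
  proof (rule graded_zero[OF sm[OF xy]])
    fix t :: real assume t: "0 < t" "t \<le> 1"
    have "cmod (of_real t * x) < d'" using t xy(1) by (simp add: norm_mult) (smt (verit) mult_left_le_one_le norm_ge_zero)
    then have "ps_eval c (of_real t * x) y = 0" using z' xy(2) by blast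
    then show "(\<Sum>\<^sub>\<infinity>k\<in>UNIV. of_real t ^ wz k * ps_term c x y k) = 0"
      by (simp add: ps_eval_def ps_term_scale_z)
  qed
  have st2: "(\<Sum>\<^sub>\<infinity>k\<in>{k\<in>{k\<in>UNIV. wz k = n1}. wy k = n2}. ps_term c x y k) = 0"
    if xy: "cmod x < d'" "cmod y < d'" for x y n1 n2
  proof (rule graded_zero)
    show "(\<lambda>k. norm (ps_term c x y k)) summable_on {k\<in>UNIV. wz k = n1}"
      using abs_sub[OF sm[OF xy]] by blast
    fix t :: real assume t: "0 < t" "t \<le> 1"
    have "cmod (of_real t * y) < d'" using t xy(2) by (simp add: norm_mult) (smt (verit) mult_left_le_one_le norm_ge_zero)
    from st1[OF xy(1) this, of n1]
    show "(\<Sum>\<^sub>\<infinity>k\<in>{k\<in>UNIV. wz k = n1}. of_real t ^ wy k * ps_term c x y k) = 0"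
      by (simp add: ps_term_scale_y)
  qed
  let ?h = "\<lambda>(a,b). (a, b, n1 - a, n2 - b)"
  have st3: "(\<Sum>a\<le>n1. \<Sum>b\<le>n2. c a b (n1-a) (n2-b) * x^a * y^b * cnj x^(n1-a) * cnj y^(n2-b)) = 0"
    if xy: "cmod x < d'" "cmod y < d'" for x y n1 n2
  proof -
    let ?h = "\<lambda>(a,b). (a, b, n1 - a, n2 - b)"
    have seteq: "{k\<in>{k\<in>UNIV. wz k = n1}. wy k = n2} = ?h ` ({..n1} \<times> {..n2})"
    proof (rule set_eqI, rule iffI)
      fix k assume "k \<in> {k\<in>{k\<in>UNIV. wz k = n1}. wy k = n2}"
      then show "k \<in> ?h ` ({..n1} \<times> {..n2})"
        by (cases k) (auto simp: wz_def wy_def image_iff intro!: bexI[where x="(fst k, fst (snd k))"])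
    qed (auto simp: wz_def wy_def)
    have inj: "inj_on ?h ({..n1} \<times> {..n2})" by (auto simp: inj_on_def)
    have "0 = (\<Sum>\<^sub>\<infinity>k\<in>?h ` ({..n1} \<times> {..n2}). ps_term c x y k)" using st2[OF xy, of n1 n2] unfolding seteq by simp
    also have "\<dots> = (\<Sum>k\<in>?h ` ({..n1} \<times> {..n2}). ps_term c x y k)" by simp
    also have "\<dots> = (\<Sum>(a,b)\<in>{..n1} \<times> {..n2}. ps_term c x y (a, b, n1-a, n2-b))"
      by (subst sum.reindex[OF inj]) (simp add: case_prod_beta comp_def)
    also have "\<dots> = (\<Sum>a\<le>n1. \<Sum>b\<le>n2. c a b (n1-a) (n2-b) * x^a * y^b * cnj x^(n1-a) * cnj y^(n2-b))"
      by (simp add: sum.cartesian_product ps_term_def)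
    finally show ?thesis by simp
  qed
  have st4: "(\<Sum>b\<le>n2. c a b (n1-a) (n2-b) * y^b * cnj y^(n2-b)) = 0"
    if y: "cmod y < d'" and a: "a \<le> n1" for y n1 n2 a
  proof -
    have "\<forall>x. cmod x < d' \<longrightarrow> (\<Sum>a\<le>n1. (\<Sum>b\<le>n2. c a b (n1-a) (n2-b) * y^b * cnj y^(n2-b)) * x^a * cnj x^(n1-a)) = 0"
    proof (intro allI impI)
      fix x assume x: "cmod x < d'"
      show "(\<Sum>a\<le>n1. (\<Sum>b\<le>n2. c a b (n1-a) (n2-b) * y^b * cnj y^(n2-b)) * x^a * cnj x^(n1-a)) = 0"
        unfolding st3[OF x y, of n1 n2, symmetric]
        by (rule sum.cong[OF refl], simp only: sum_distrib_right, rule sum.cong[OF refl], simp add: mult_ac)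
    qed
    from circ_poly_zero[OF d' this] a show ?thesis by blast
  qed
  have "c a b ((a+p)-a) ((b+q)-b) = 0"
  proof -
    have "\<forall>y. cmod y < d' \<longrightarrow> (\<Sum>b'\<le>b+q. c a b' ((a+p)-a) ((b+q)-b') * y^b' * cnj y^((b+q)-b')) = 0"
      using st4[of _ a "a+p" "b+q"] by simp
    from circ_poly_zero[OF d' this] have "\<forall>b'\<le>b+q. c a b' ((a+p)-a) ((b+q)-b') = 0" .
    then show ?thesis by (metis le_add1)
  qed
  then show ?thesis by simp
qed

lemma infsum_norm_le:
  fixes f :: "'k \<Rightarrow> complex"
  assumes "g summable_on A" "\<And>k. k \<in> A \<Longrightarrow> norm (f k) \<le> g k"
  shows "norm (\<Sum>\<^sub>\<infinity>k\<in>A. f k) \<le> (\<Sum>\<^sub>\<infinity>k\<in>A. g k)"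
proof -
  have ab: "(\<lambda>k. norm (f k)) summable_on A" by (rule Infinite_Sum.abs_summable_on_comparison_test'[OF assms])
  have "norm (\<Sum>\<^sub>\<infinity>k\<in>A. f k) \<le> (\<Sum>\<^sub>\<infinity>k\<in>A. norm (f k))" by (rule norm_infsum_bound[OF ab])
  also have "\<dots> \<le> (\<Sum>\<^sub>\<infinity>k\<in>A. g k)" by (rule infsum_mono[OF ab assms(1) assms(2)])
  finally show ?thesis .
qed

lemma ps_hom_scale:
  assumes "wt_hom \<mu> c"
  shows "ps_eval c (of_real t * x) y = of_real t ^ \<mu> * ps_eval c x y"
proof -
  have "ps_term c (of_real t * x) y k = of_real t ^ \<mu> * ps_term c x y k" for k
  proof (cases k)
    case (fields a b p q)
    show ?thesis
    proof (cases "c a b p q = 0")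
      case True then show ?thesis by (simp add: fields ps_term_def)
    next
      case False then have "a + p = \<mu>" using assms unfolding wt_hom_def by blast
      then have "wz k = \<mu>" by (simp add: fields wz_def)
      then show ?thesis by (simp add: ps_term_scale_z)
    qed
  qed
  then have "ps_term c (of_real t * x) y = (\<lambda>k. of_real t ^ \<mu> * ps_term c x y k)" by (rule ext)
  then show ?thesis unfolding ps_eval_def by (simp add: infsum_cmult_right')
qed

lemma ps_ge_bound:
  assumes "wt_ge N c" "(\<lambda>k. norm (ps_term c (of_real \<rho>) (of_real \<rho>) k)) summable_on UNIV"
    "cmod x \<le> \<rho>" "cmod y \<le> \<rho>" "0 \<le> t" "t \<le> 1"
  shows "cmod (ps_eval c (of_real t * x) y) \<le> t ^ N * (\<Sum>\<^sub>\<infinity>k. norm (ps_term c (of_real \<rho>) (of_real \<rho>) k))"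
proof -
  have r0: "\<rho> \<ge> 0" using assms(3) norm_ge_zero order_trans by blast
  have b: "norm (ps_term c (of_real t * x) y k) \<le> t ^ N * norm (ps_term c (of_real \<rho>) (of_real \<rho>) k)" for k
  proof (cases k)
    case (fields a b p q)
    show ?thesis
    proof (cases "c a b p q = 0")
      case True then show ?thesis by (simp add: fields ps_term_def)
    next
      case False then have w: "a + p \<ge> N" using assms(1) unfolding wt_ge_def by blast
      have tp: "t ^ (a+p) \<le> t ^ N" using w assms(5,6) by (simp add: power_decreasing)
      have "norm (ps_term c (of_real t * x) y k) = t^(a+p) * (cmod (c a b p q) * (cmod x ^ a * cmod y ^ b * cmod x ^ p * cmod y ^ q))"
        using assms(5) by (simp add: fields ps_term_def norm_mult norm_power power_mult_distrib power_add)
      also have "\<dots> \<le> t^N * (cmod (c a b p q) * (\<rho> ^ a * \<rho> ^ b * \<rho> ^ p * \<rho> ^ q))"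
        apply (intro mult_mono tp power_mono assms(3,4) mult_nonneg_nonneg) using assms(5) r0 by auto
      also have "\<dots> = t ^ N * norm (ps_term c (of_real \<rho>) (of_real \<rho>) k)"
        using r0 by (simp add: fields ps_term_def norm_mult norm_power)
      finally show ?thesis .
    qed
  qed
  have "cmod (ps_eval c (of_real t * x) y) \<le> (\<Sum>\<^sub>\<infinity>k. t ^ N * norm (ps_term c (of_real \<rho>) (of_real \<rho>) k))"
    unfolding ps_eval_def by (rule infsum_norm_le[OF summable_on_cmult_right[OF assms(2)] b])
  also have "\<dots> = t ^ N * (\<Sum>\<^sub>\<infinity>k. norm (ps_term c (of_real \<rho>) (of_real \<rho>) k))" by (rule infsum_cmult_right')
  finally show ?thesis .
qed

lemma pow_diff_bound:
  fixes u v :: complex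
  assumes "cmod u \<le> \<rho>" "cmod v \<le> \<rho>"
  shows "cmod (u^e - v^e) \<le> of_nat e * \<rho>^(e-1) * cmod (u - v)"
proof (induction e)
  case 0 then show ?case by simp
next
  case (Suc e)
  have r0: "\<rho> \<ge> 0" using assms(1) norm_ge_zero order_trans by blast
  have "u^Suc e - v^Suc e = u * (u^e - v^e) + (u - v) * v^e" by (simp add: algebra_simps)
  then have "cmod (u^Suc e - v^Suc e) \<le> cmod u * cmod (u^e - v^e) + cmod (u - v) * cmod v ^ e"
    by (metis norm_mult norm_power norm_triangle_ineq)
  also have "\<dots> \<le> \<rho> * (of_nat e * \<rho>^(e-1) * cmod (u - v)) + cmod (u - v) * \<rho> ^ e"
    by (intro add_mono mult_mono Suc.IH assms(1) power_mono assms(2) mult_left_mono) (auto simp: r0)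
  also have "\<dots> = of_nat (Suc e) * \<rho>^(Suc e - 1) * cmod (u - v)"
    by (cases e) (auto simp: algebra_simps)
  finally show ?case .
qed

lemma pow_diff_bound2:
  fixes u v :: complex
  assumes "cmod u \<le> \<rho>" "cmod v \<le> \<rho>" "\<rho> > 0"
  shows "cmod (u^e - v^e) \<le> (2*\<rho>)^e / \<rho> * cmod (u - v)"
proof -
  have "of_nat e * \<rho>^(e-1) \<le> (2*\<rho>)^e / \<rho>"
  proof (cases e)
    case 0 then show ?thesis using assms(3) by simp
  next
    case (Suc m)
    have "real (Suc m) \<le> 2 ^ Suc m"
      by (metis less_exp less_imp_le of_nat_le_iff of_nat_numeral of_nat_power)
    then have "real (Suc m) * \<rho>^m \<le> 2 ^ Suc m * \<rho>^m" using assms(3) by (intro mult_right_mono) auto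
    then show ?thesis using Suc assms(3) by (simp add: field_simps power_mult_distrib)
  qed
  then show ?thesis using pow_diff_bound[OF assms(1,2), of e]
    by (meson mult_right_mono norm_ge_zero order_trans)
qed

lemma mono4:
  fixes a b c d a' b' c' d' :: real
  assumes "0 \<le> a" "a \<le> a'" "0 \<le> b" "b \<le> b'" "0 \<le> c" "c \<le> c'" "0 \<le> d" "d \<le> d'"
  shows "a*b*c*d \<le> a'*b'*c'*d'"
proof -
  have "a*b \<le> a'*b'" using assms by (intro mult_mono) auto
  moreover have "a*b*c \<le> a'*b'*c'" using assms calculation by (intro mult_mono) auto
  ultimately show ?thesis using assms by (intro mult_mono) auto
qed

lemma prod4_diff:
  fixes A1 A2 A3 A4 B1 B2 B3 B4 :: complex
  assumes "cmod A2 \<le> M2" "cmod A3 \<le> M3" "cmod A4 \<le> M4"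
    "cmod B1 \<le> M1" "cmod B2 \<le> M2" "cmod B3 \<le> M3"
    "cmod (A1 - B1) \<le> d1" "cmod (A2 - B2) \<le> d2" "cmod (A3 - B3) \<le> d3" "cmod (A4 - B4) \<le> d4"
  shows "cmod (A1*A2*A3*A4 - B1*B2*B3*B4) \<le> d1*M2*M3*M4 + M1*d2*M3*M4 + M1*M2*d3*M4 + M1*M2*M3*d4"
proof -
  define X1 where "X1 = (A1-B1)*A2*A3*A4"
  define X2 where "X2 = B1*(A2-B2)*A3*A4"
  define X3 where "X3 = B1*B2*(A3-B3)*A4"
  define X4 where "X4 = B1*B2*B3*(A4-B4)"
  have e: "A1*A2*A3*A4 - B1*B2*B3*B4 = X1 + X2 + X3 + X4"
    unfolding X1_def X2_def X3_def X4_def by (simp add: algebra_simps)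
  have tri: "cmod (X1 + X2 + X3 + X4) \<le> cmod X1 + cmod X2 + cmod X3 + cmod X4"
    using norm_triangle_ineq[of "X1+X2+X3" X4] norm_triangle_ineq[of "X1+X2" X3] norm_triangle_ineq[of X1 X2]
    by linarith
  have "cmod X1 \<le> d1*M2*M3*M4" unfolding X1_def norm_mult by (rule mono4) (auto simp: assms)
  moreover have "cmod X2 \<le> M1*d2*M3*M4" unfolding X2_def norm_mult by (rule mono4) (auto simp: assms)
  moreover have "cmod X3 \<le> M1*M2*d3*M4" unfolding X3_def norm_mult by (rule mono4) (auto simp: assms)
  moreover have "cmod X4 \<le> M1*M2*M3*d4" unfolding X4_def norm_mult by (rule mono4) (auto simp: assms)
  ultimately show ?thesis unfolding e using tri by linarith
qed

lemma infsum_diff':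
  fixes f g :: "'k \<Rightarrow> complex"
  assumes "f summable_on A" "g summable_on A"
  shows "(\<Sum>\<^sub>\<infinity>k\<in>A. f k - g k) = (\<Sum>\<^sub>\<infinity>k\<in>A. f k) - (\<Sum>\<^sub>\<infinity>k\<in>A. g k)"
proof -
  have "(\<Sum>\<^sub>\<infinity>k\<in>A. f k + (- g k)) = (\<Sum>\<^sub>\<infinity>k\<in>A. f k) + (\<Sum>\<^sub>\<infinity>k\<in>A. - g k)"
    by (rule infsum_add[OF assms(1)]) (simp add: summable_on_uminus assms(2))
  then show ?thesis by (simp add: infsum_uminus)
qed

lemma ps_summable:
  assumes "(\<lambda>k. norm (ps_term c x y k)) summable_on UNIV"
  shows "ps_term c x y summable_on UNIV"
  by (rule abs_summable_summable) (use assms in simp)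

lemma ps_lip:
  assumes conv: "ps_convergent c"
  shows "\<exists>\<rho>>0. \<exists>K. \<forall>x1 y1 x2 y2. cmod x1 \<le> \<rho> \<longrightarrow> cmod y1 \<le> \<rho> \<longrightarrow> cmod x2 \<le> \<rho> \<longrightarrow> cmod y2 \<le> \<rho> \<longrightarrow>
      cmod (ps_eval c x1 y1 - ps_eval c x2 y2) \<le> K * (cmod (x1 - x2) + cmod (y1 - y2))"
proof -
  obtain r where r: "r > 0" "\<And>x y. cmod x < r \<Longrightarrow> cmod y < r \<Longrightarrow> (\<lambda>k. norm (ps_term c x y k)) summable_on UNIV"
    using conv unfolding ps_convergent_def by blast
  define \<rho> where "\<rho> = r / 3"
  have \<rho>: "\<rho> > 0" "2 * \<rho> < r" using r(1) by (auto simp: \<rho>_def)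
  let ?P = "of_real (2*\<rho>) :: complex"
  have smP: "(\<lambda>k. norm (ps_term c ?P ?P k)) summable_on UNIV" using r(2) \<rho> by simp
  define S where "S = (\<Sum>\<^sub>\<infinity>k. norm (ps_term c ?P ?P k))"
  have "\<forall>x1 y1 x2 y2. cmod x1 \<le> \<rho> \<longrightarrow> cmod y1 \<le> \<rho> \<longrightarrow> cmod x2 \<le> \<rho> \<longrightarrow> cmod y2 \<le> \<rho> \<longrightarrow>
      cmod (ps_eval c x1 y1 - ps_eval c x2 y2) \<le> (4 / \<rho> * S) * (cmod (x1 - x2) + cmod (y1 - y2))"
  proof (intro allI impI)
    fix x1 y1 x2 y2 :: complex
    assume b: "cmod x1 \<le> \<rho>" "cmod y1 \<le> \<rho>" "cmod x2 \<le> \<rho>" "cmod y2 \<le> \<rho>"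
    define D where "D = cmod (x1 - x2) + cmod (y1 - y2)"
    have D0: "D \<ge> 0" by (simp add: D_def)
    have sm1: "(\<lambda>k. norm (ps_term c x1 y1 k)) summable_on UNIV" using r(2) b \<rho> by simp
    have sm2: "(\<lambda>k. norm (ps_term c x2 y2 k)) summable_on UNIV" using r(2) b \<rho> by simp
    have pw: "cmod u ^ e \<le> (2*\<rho>)^e" if "cmod u \<le> \<rho>" for u :: complex and e
      using that \<rho>(1) by (intro power_mono) auto
    have pd: "cmod (u^e - v^e) \<le> (2*\<rho>)^e / \<rho> * D" if "cmod u \<le> \<rho>" "cmod v \<le> \<rho>" "cmod (u - v) \<le> D"
      for u v :: complex and e
      using pow_diff_bound2[OF that(1,2) \<rho>(1), of e] that(3) \<rho>(1)
      by (meson divide_nonneg_pos mult_left_mono order_trans zero_le_numeral zero_le_power mult_nonneg_nonneg less_imp_le)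
    have dx: "cmod (x1 - x2) \<le> D" "cmod (y1 - y2) \<le> D" "cmod (cnj x1 - cnj x2) \<le> D" "cmod (cnj y1 - cnj y2) \<le> D"
      unfolding D_def by (auto simp flip: complex_cnj_diff)
    have tb: "norm (ps_term c x1 y1 k - ps_term c x2 y2 k) \<le> 4 / \<rho> * D * norm (ps_term c ?P ?P k)" for k
    proof (cases k)
      case (fields a b p q)
      have e: "ps_term c x1 y1 k - ps_term c x2 y2 k = c a b p q * (x1^a * y1^b * cnj x1^p * cnj y1^q - x2^a * y2^b * cnj x2^p * cnj y2^q)"
        by (simp add: fields ps_term_def algebra_simps)
      have "cmod (x1^a * y1^b * cnj x1^p * cnj y1^q - x2^a * y2^b * cnj x2^p * cnj y2^q)
         \<le> ((2*\<rho>)^a / \<rho> * D) * (2*\<rho>)^b * (2*\<rho>)^p * (2*\<rho>)^q + (2*\<rho>)^a * ((2*\<rho>)^b / \<rho> * D) * (2*\<rho>)^p * (2*\<rho>)^q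
          + (2*\<rho>)^a * (2*\<rho>)^b * ((2*\<rho>)^p / \<rho> * D) * (2*\<rho>)^q + (2*\<rho>)^a * (2*\<rho>)^b * (2*\<rho>)^p * ((2*\<rho>)^q / \<rho> * D)"
        by (rule prod4_diff) (use b pw pd dx in \<open>auto simp: norm_power\<close>)
      also have "\<dots> = 4 / \<rho> * D * (2*\<rho>)^(a+b+p+q)" by (simp add: power_add field_simps)
      finally have m: "cmod (x1^a * y1^b * cnj x1^p * cnj y1^q - x2^a * y2^b * cnj x2^p * cnj y2^q) \<le> 4 / \<rho> * D * (2*\<rho>)^(a+b+p+q)" .
      have nP: "norm (ps_term c ?P ?P k) = cmod (c a b p q) * (2*\<rho>)^(a+b+p+q)"
        using \<rho>(1) by (simp only: fields ps_term_def norm_mult norm_power power_add split) simp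
      have "norm (ps_term c x1 y1 k - ps_term c x2 y2 k) \<le> cmod (c a b p q) * (4 / \<rho> * D * (2*\<rho>)^(a+b+p+q))"
        unfolding e norm_mult by (rule mult_left_mono[OF m norm_ge_zero])
      also have "\<dots> = 4 / \<rho> * D * norm (ps_term c ?P ?P k)" unfolding nP by (simp only: mult_ac)
      finally show ?thesis .
    qed
    have "cmod (ps_eval c x1 y1 - ps_eval c x2 y2) = cmod (\<Sum>\<^sub>\<infinity>k. ps_term c x1 y1 k - ps_term c x2 y2 k)"
      unfolding ps_eval_def by (simp add: infsum_diff' ps_summable sm1 sm2)
    also have "\<dots> \<le> (\<Sum>\<^sub>\<infinity>k. 4 / \<rho> * D * norm (ps_term c ?P ?P k))"
      by (rule infsum_norm_le[OF summable_on_cmult_right[OF smP] tb])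
    also have "\<dots> = 4 / \<rho> * D * S" unfolding S_def by (rule infsum_cmult_right')
    also have "\<dots> = 4 / \<rho> * S * D" by simp
    finally have "cmod (ps_eval c x1 y1 - ps_eval c x2 y2) \<le> 4 / \<rho> * S * (cmod (x1 - x2) + cmod (y1 - y2))"
      by (simp add: D_def)
    then show "cmod (ps_eval c x1 y1 - ps_eval c x2 y2) \<le> (4 / \<rho> * S) * (cmod (x1 - x2) + cmod (y1 - y2))" .
  qed
  then show ?thesis using \<rho>(1) by blast
qed

lemma ev_box:
  assumes "eventually P (nhds ((0::complex), (0::complex)))"
  shows "\<exists>\<delta>>0. \<forall>x y. cmod x < \<delta> \<longrightarrow> cmod y < \<delta> \<longrightarrow> P (x, y)"
proof -
  obtain d where d: "d > 0" "\<And>p. dist p (0,0) < d \<Longrightarrow> P p"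
    using assms unfolding eventually_nhds_metric by blast
  have "P (x, y)" if "cmod x < d/2" "cmod y < d/2" for x y
  proof (rule d(2))
    have "dist (x, y) (0, 0) = sqrt ((cmod x)^2 + (cmod y)^2)" by (simp add: dist_Pair_Pair)
    also have "\<dots> \<le> \<bar>cmod x\<bar> + \<bar>cmod y\<bar>" by (rule sqrt_sum_squares_le_sum_abs)
    finally show "dist (x, y) (0, 0) < d" using that by simp
  qed
  then show ?thesis using d(1) by (intro exI[of _ "d/2"]) auto
qed

lemma ev_box3:
  assumes "eventually P (nhds ((0::complex), (0::complex), (0::complex)))"
  shows "\<exists>\<delta>>0. \<forall>x y w. cmod x < \<delta> \<longrightarrow> cmod y < \<delta> \<longrightarrow> cmod w < \<delta> \<longrightarrow> P (x, y, w)"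
proof -
  obtain d where d: "d > 0" "\<And>p. dist p (0,0,0) < d \<Longrightarrow> P p"
    using assms unfolding eventually_nhds_metric by blast
  have "P (x, y, w)" if "cmod x < d/3" "cmod y < d/3" "cmod w < d/3" for x y w
  proof (rule d(2))
    have "dist (y, w) (0, 0) \<le> \<bar>cmod y\<bar> + \<bar>cmod w\<bar>"
      using sqrt_sum_squares_le_sum_abs[of "cmod y" "cmod w"] by (simp add: dist_Pair_Pair)
    moreover have "dist (x, y, w) (0, 0, 0) \<le> \<bar>cmod x\<bar> + \<bar>dist (y, w) (0, 0)\<bar>"
      using sqrt_sum_squares_le_sum_abs[of "cmod x" "dist (y, w) (0, 0)"] by (simp add: dist_Pair_Pair)
    ultimately show "dist (x, y, w) (0, 0, 0) < d" using that by simp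
  qed
  then show ?thesis using d(1) by (intro exI[of _ "d/3"]) auto
qed

lemma box_ev:
  assumes "\<delta> > 0" "\<And>x y. cmod x < \<delta> \<Longrightarrow> cmod y < \<delta> \<Longrightarrow> P (x, y)"
  shows "eventually P (nhds ((0::complex), (0::complex)))"
  unfolding eventually_nhds_metric
proof (intro exI[of _ \<delta>] conjI assms(1) allI impI)
  fix p :: "complex \<times> complex" assume dp: "dist p (0,0) < \<delta>"
  obtain x y where p: "p = (x, y)" by (cases p)
  have d: "sqrt ((cmod x)^2 + (cmod y)^2) < \<delta>" using dp by (simp add: p dist_Pair_Pair)
  have "cmod x < \<delta>" using real_sqrt_sum_squares_ge1[of "cmod x" "cmod y"] d by linarith
  moreover have "cmod y < \<delta>" using real_sqrt_sum_squares_ge2[of "cmod y" "cmod x"] d by linarith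
  ultimately show "P p" using assms(2) p by simp
qed

lemma mfun_scale: "mfun (of_real t * x) y = of_real t ^ 2 * mfun x y"
  by (simp add: mfun_def power2_eq_square field_simps)

lemma two_re: "2 * complex_of_real (Re X) = X + cnj X" by (simp add: complex_add_cnj)

lemma alg_id:
  fixes z w \<zeta> u a ca b cb D :: complex
  assumes D: "D = 1 - \<zeta> * u" "D \<noteq> 0"
  shows "((a * w + z * ca + a * z * u + cb * z^2 / 2 + ca * w * \<zeta> + b * w^2 / 2) * D
          - (z * w + z^2 * u / 2 + w^2 * \<zeta> / 2) * (- (b * u + cb * \<zeta>))) / (D * D)
   = (w + z * u) / D * a + (w + z * u)^2 / (2 * D^2) * b + ((z + w * \<zeta>) / (1 - u * \<zeta>) * ca + (z + w * \<zeta>)^2 / (2 * (1 - u * \<zeta>)^2) * cb)"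
proof -
  have D2: "1 - u * \<zeta> = D" using D by (simp add: mult.commute)
  have poly: "((a * w + z * ca + a * z * u + cb * z^2 / 2 + ca * w * \<zeta> + b * w^2 / 2) * D
          - (z * w + z^2 * u / 2 + w^2 * \<zeta> / 2) * (- (b * u + cb * \<zeta>)))
     = (w + z * u) * a * D + (w + z * u)^2 * b / 2 + (z + w * \<zeta>) * ca * D + (z + w * \<zeta>)^2 * cb / 2"
    unfolding D(1) power2_eq_square by (simp add: field_simps)
  show ?thesis unfolding D2 poly using D(2) by (simp add: field_simps power2_eq_square)
qed


lemma mfun_deriv:
  fixes z \<zeta> a b :: complex
  assumes D: "1 - \<zeta> * cnj \<zeta> \<noteq> 0"
  defines "L \<equiv> complex_of_real (2 * Re ((cnj z + z * cnj \<zeta>) / (1 - \<zeta> * cnj \<zeta>) * a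
                + (cnj z + z * cnj \<zeta>)^2 / (2 * (1 - \<zeta> * cnj \<zeta>)^2) * b))"
  shows "((\<lambda>t::real. (mfun (z + of_real t * a) (\<zeta> + of_real t * b) - mfun z \<zeta> - of_real t * L) / of_real t) \<longlongrightarrow> 0) (at_right 0)"
proof -
  define \<Phi> where "\<Phi> s = ((z + s*a) * (cnj z + s * cnj a) + (z + s*a)^2 * (cnj \<zeta> + s * cnj b) / 2
       + (cnj z + s * cnj a)^2 * (\<zeta> + s * b) / 2) / (1 - (\<zeta> + s * b) * (cnj \<zeta> + s * cnj b))" for s
  have mf: "mfun (z + of_real t * a) (\<zeta> + of_real t * b) = \<Phi> (of_real t)" for t
    by (simp add: mfun_def \<Phi>_def)
  have m0: "mfun z \<zeta> = \<Phi> 0" by (simp add: mfun_def \<Phi>_def)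
  have cD: "1 - cnj \<zeta> * \<zeta> \<noteq> 0" using D by (simp add: mult.commute)
  define N1 where "N1 = a * cnj z + z * cnj a + a * z * cnj \<zeta> + cnj b * z^2 / 2 + cnj a * cnj z * \<zeta> + b * (cnj z)^2 / 2"
  define N0 where "N0 = z * cnj z + z^2 * cnj \<zeta> / 2 + (cnj z)^2 * \<zeta> / 2"
  define D1 where "D1 = - (b * cnj \<zeta> + cnj b * \<zeta>)"
  have D': "\<zeta> * cnj \<zeta> \<noteq> 1" using D by auto
  have "(\<Phi> has_field_derivative ((N1 * (1 - \<zeta> * cnj \<zeta>) - N0 * D1) / ((1 - \<zeta> * cnj \<zeta>) * (1 - \<zeta> * cnj \<zeta>)))) (at 0)"
    unfolding \<Phi>_def N1_def N0_def D1_def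
    by (auto intro!: derivative_eq_intros simp: D') (use D in \<open>simp add: field_simps\<close>)
  moreover have "(N1 * (1 - \<zeta> * cnj \<zeta>) - N0 * D1) / ((1 - \<zeta> * cnj \<zeta>) * (1 - \<zeta> * cnj \<zeta>)) = L"
    unfolding N1_def N0_def D1_def L_def complex_add_cnj[symmetric]
    by (subst alg_id[OF refl D]) (simp add: mult_ac)
  ultimately have "(\<Phi> has_field_derivative L) (at 0)" by simp
  then have lim: "((\<lambda>s. (\<Phi> s - \<Phi> 0) / (s - 0)) \<longlongrightarrow> L) (at 0)" by (simp add: has_field_derivative_iff)
  have lim2: "((\<lambda>s. (\<Phi> s - \<Phi> 0 - s * L) / s) \<longlongrightarrow> 0) (at 0)"
  proof -
    have "((\<lambda>s. (\<Phi> s - \<Phi> 0) / (s - 0) - L) \<longlongrightarrow> L - L) (at 0)" by (intro tendsto_intros lim)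
    then have "((\<lambda>s. (\<Phi> s - \<Phi> 0) / (s - 0) - L) \<longlongrightarrow> 0) (at 0)" by simp
    then show ?thesis
      by (rule Lim_transform_eventually) (auto simp: eventually_at_filter field_simps)
  qed
  have "filterlim (\<lambda>t::real. complex_of_real t) (at 0) (at_right 0)"
    by (rule filterlim_atI) (auto intro!: tendsto_eq_intros simp: eventually_at_filter)
  from filterlim_compose[OF lim2 this] show ?thesis by (simp add: mf m0)
qed

lemma alg_main:
  fixes T t2 e m mZ SG SG' R R' rh S2 SD L :: complex
  assumes "T \<noteq> 0" "T = t2 * e" "t2 * m + SG + R + T * rh = t2 * mZ + SG' + R'" "SG' - SG = S2 + SD"
  shows "(SD + (L - rh) * T) / T = - (t2 * (mZ - m - e * L) / T + S2 / T + R' / T - R / T)"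
proof -
  have "SD + (L - rh) * T = - (t2 * (mZ - m - e * L) + S2 + R' - R)"
    using assms(2-4) by algebra
  then show ?thesis by (simp add: add_divide_distrib diff_divide_distrib)
qed

lemma null_bound:
  fixes E :: "real \<Rightarrow> complex"
  assumes "\<And>t. 0 < t \<Longrightarrow> t \<le> 1 \<Longrightarrow> norm (E t) \<le> C * t"
  shows "(E \<longlongrightarrow> 0) (at_right 0)"
proof (rule Lim_null_comparison)
  have "eventually (\<lambda>t::real. 0 < t \<and> t < 1) (at_right 0)"
    by (simp add: eventually_at_right_field) (intro exI[of _ 1], auto)
  then show "eventually (\<lambda>t. norm (E t) \<le> C * t) (at_right 0)"
    by (rule eventually_mono) (use assms in auto)
  show "((\<lambda>t. C * t) \<longlongrightarrow> 0) (at_right 0)" by (auto intro!: tendsto_eq_intros)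
qed

lemma core:
  fixes \<nu> :: nat and z \<zeta> :: complex and F F' :: "complex \<Rightarrow> complex \<Rightarrow> real"
    and G G' :: "nat \<Rightarrow> coeffs4" and R R' :: coeffs4 and f g h :: "complex \<Rightarrow> complex \<Rightarrow> complex"
  defines "Z \<equiv> \<lambda>t::real. z + of_real (t^(\<nu>-2)) * f z \<zeta>"
    and "Y \<equiv> \<lambda>t::real. \<zeta> + of_real (t^(\<nu>-2)) * g z \<zeta>"
  assumes nu: "\<nu> \<ge> 3"
    and homG: "\<forall>\<mu>\<in>{3..\<nu>}. wt_hom \<mu> (G \<mu>)" and homG': "\<forall>\<mu>\<in>{3..\<nu>}. wt_hom \<mu> (G' \<mu>)"
    and fs: "\<And>t. f (of_real t * z) \<zeta> = of_real t ^ (\<nu>-1) * f z \<zeta>"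
    and gs: "\<And>t. g (of_real t * z) \<zeta> = of_real t ^ (\<nu>-2) * g z \<zeta>"
    and hs: "\<And>t. h (of_real t * z) \<zeta> = of_real t ^ \<nu> * h z \<zeta>"
    and hF: "\<And>t. 0 < t \<Longrightarrow> t \<le> 1 \<Longrightarrow> complex_of_real (F (of_real t * z) \<zeta>) = mfun (of_real t * z) \<zeta>
               + (\<Sum>\<mu>=3..\<nu>. ps_eval (G \<mu>) (of_real t * z) \<zeta>) + ps_eval R (of_real t * z) \<zeta>"
    and hF': "\<And>t. 0 < t \<Longrightarrow> t \<le> 1 \<Longrightarrow> complex_of_real (F' (of_real t * Z t) (Y t)) = mfun (of_real t * Z t) (Y t)
               + (\<Sum>\<mu>=3..\<nu>. ps_eval (G' \<mu>) (of_real t * Z t) (Y t)) + ps_eval R' (of_real t * Z t) (Y t)"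
    and hmap: "\<And>t. 0 < t \<Longrightarrow> t \<le> 1 \<Longrightarrow> F (of_real t * z) \<zeta> + Re (h (of_real t * z) \<zeta>)
               = F' (of_real t * z + f (of_real t * z) \<zeta>) (\<zeta> + g (of_real t * z) \<zeta>)"
    and hLip: "\<forall>\<mu>\<in>{3..\<nu>}. \<exists>K. \<forall>t. 0 < t \<longrightarrow> t \<le> 1 \<longrightarrow>
               cmod (ps_eval (G' \<mu>) (Z t) (Y t) - ps_eval (G' \<mu>) z \<zeta>) \<le> K * t^(\<nu>-2)"
    and hR: "\<exists>S. \<forall>t. 0 < t \<longrightarrow> t \<le> 1 \<longrightarrow> cmod (ps_eval R (of_real t * z) \<zeta>) \<le> S * t^(\<nu>+1)"
    and hR': "\<exists>S. \<forall>t. 0 < t \<longrightarrow> t \<le> 1 \<longrightarrow> cmod (ps_eval R' (of_real t * Z t) (Y t)) \<le> S * t^(\<nu>+1)"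
    and hD: "1 - \<zeta> * cnj \<zeta> \<noteq> 0"
  shows "(\<forall>\<mu>\<in>{3..\<nu>-1}. ps_eval (G' \<mu>) z \<zeta> = ps_eval (G \<mu>) z \<zeta>) \<and>
         ps_eval (G' \<nu>) z \<zeta> = ps_eval (G \<nu>) z \<zeta>
              - complex_of_real (2 * Re (
                  (cnj z + z * cnj \<zeta>) / (1 - \<zeta> * cnj \<zeta>) * f z \<zeta>
                + (cnj z + z * cnj \<zeta>)^2 / (2 * (1 - \<zeta> * cnj \<zeta>)^2) * g z \<zeta>
                - h z \<zeta> / 2))"
proof -
  define X where "X = (cnj z + z * cnj \<zeta>) / (1 - \<zeta> * cnj \<zeta>) * f z \<zeta>
                + (cnj z + z * cnj \<zeta>)^2 / (2 * (1 - \<zeta> * cnj \<zeta>)^2) * g z \<zeta>"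
  define L where "L = complex_of_real (2 * Re X)"
  define \<Delta> where "\<Delta> \<mu> = ps_eval (G' \<mu>) z \<zeta> - ps_eval (G \<mu>) z \<zeta>" for \<mu>
  define c0 where "c0 = L - complex_of_real (Re (h z \<zeta>))"
  define d where "d k = (if k \<in> {3..\<nu>} then \<Delta> k else 0) + (if k = \<nu> then c0 else 0)" for k
  define E1 where "E1 t = (mfun (Z t) (Y t) - mfun z \<zeta> - of_real (t^(\<nu>-2)) * L) / of_real (t^(\<nu>-2))" for t :: real
  define E2 where "E2 t = (\<Sum>\<mu>=3..\<nu>. of_real t ^ \<mu> * (ps_eval (G' \<mu>) (Z t) (Y t) - ps_eval (G' \<mu>) z \<zeta>) / of_real t ^ \<nu>)" for t :: real
  define E3 where "E3 t = ps_eval R' (of_real t * Z t) (Y t) / of_real t ^ \<nu>" for t :: real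
  define E4 where "E4 t = ps_eval R (of_real t * z) \<zeta> / of_real t ^ \<nu>" for t :: real
  have nu2: "\<nu> = 2 + (\<nu> - 2)" "\<nu> - 1 = Suc (\<nu> - 2)" using nu by auto
  have Pd: "(\<Sum>k\<le>\<nu>. d k * of_real t ^ k) = (\<Sum>\<mu>=3..\<nu>. \<Delta> \<mu> * of_real t ^ \<mu>) + c0 * of_real t ^ \<nu>" for t :: real
  proof -
    have "(\<Sum>k\<le>\<nu>. d k * of_real t ^ k) = (\<Sum>k\<le>\<nu>. (if k \<in> {3..\<nu>} then \<Delta> k * of_real t ^ k else 0)) + (\<Sum>k\<le>\<nu>. (if k = \<nu> then c0 * of_real t ^ k else 0))"
      unfolding sum.distrib[symmetric] by (rule sum.cong) (auto simp: d_def distrib_right)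
    also have "(\<Sum>k\<le>\<nu>. (if k \<in> {3..\<nu>} then \<Delta> k * of_real t ^ k else 0)) = (\<Sum>k\<in>{..\<nu>} \<inter> {3..\<nu>}. \<Delta> k * of_real t ^ k)"
      by (rule sum.inter_restrict[symmetric]) simp
    also have "{..\<nu>} \<inter> {3..\<nu>} = {3..\<nu>}" by auto
    finally show ?thesis by simp
  qed
  have main: "(\<Sum>k\<le>\<nu>. d k * of_real t ^ k) / of_real t ^ \<nu> = - (E1 t + E2 t + E3 t - E4 t)" if t: "0 < t" "t \<le> 1" for t :: real
  proof -
    let ?t = "complex_of_real t"
    have tn: "?t ^ \<nu> = ?t^2 * of_real (t^(\<nu>-2))"
    proof -
      have e: "2 + (\<nu>-2) = \<nu>" using nu by simp
      have "?t ^ \<nu> = ?t^(2 + (\<nu>-2))" by (simp only: e)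
      also have "\<dots> = ?t^2 * of_real (t^(\<nu>-2))" by (simp add: power_add power2_eq_square)
      finally show ?thesis .
    qed
    have t0: "?t \<noteq> 0" "of_real (t^(\<nu>-2)) \<noteq> (0::complex)" using t by auto
    have arg1: "of_real t * z + f (of_real t * z) \<zeta> = of_real t * Z t"
      unfolding fs Z_def nu2(2) by (simp add: algebra_simps)
    have arg2: "\<zeta> + g (of_real t * z) \<zeta> = Y t" unfolding gs Y_def by simp
    have reh: "complex_of_real (Re (h (of_real t * z) \<zeta>)) = ?t ^ \<nu> * complex_of_real (Re (h z \<zeta>))"
      unfolding hs by (simp flip: of_real_power)
    have eq: "complex_of_real (F (of_real t * z) \<zeta>) + complex_of_real (Re (h (of_real t * z) \<zeta>)) = complex_of_real (F' (of_real t * Z t) (Y t))"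
      using hmap[OF t] arg1 arg2 by (metis of_real_add)
    have eq2: "?t^2 * mfun z \<zeta> + (\<Sum>\<mu>=3..\<nu>. ?t ^ \<mu> * ps_eval (G \<mu>) z \<zeta>) + ps_eval R (of_real t * z) \<zeta> + ?t ^ \<nu> * complex_of_real (Re (h z \<zeta>))
      = ?t^2 * mfun (Z t) (Y t) + (\<Sum>\<mu>=3..\<nu>. ?t ^ \<mu> * ps_eval (G' \<mu>) (Z t) (Y t)) + ps_eval R' (of_real t * Z t) (Y t)"
    proof -
      have s1: "(\<Sum>\<mu>=3..\<nu>. ps_eval (G \<mu>) (of_real t * z) \<zeta>) = (\<Sum>\<mu>=3..\<nu>. ?t ^ \<mu> * ps_eval (G \<mu>) z \<zeta>)"
        using homG by (intro sum.cong refl ps_hom_scale) auto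
      have s2: "(\<Sum>\<mu>=3..\<nu>. ps_eval (G' \<mu>) (of_real t * Z t) (Y t)) = (\<Sum>\<mu>=3..\<nu>. ?t ^ \<mu> * ps_eval (G' \<mu>) (Z t) (Y t))"
        using homG' by (intro sum.cong refl ps_hom_scale) auto
      show ?thesis using eq hF[OF t] hF'[OF t] reh s1 s2 by (simp add: mfun_scale)
    qed
    have sumid: "(\<Sum>\<mu>=3..\<nu>. ?t ^ \<mu> * ps_eval (G' \<mu>) (Z t) (Y t)) - (\<Sum>\<mu>=3..\<nu>. ?t ^ \<mu> * ps_eval (G \<mu>) z \<zeta>)
        = (\<Sum>\<mu>=3..\<nu>. ?t ^ \<mu> * (ps_eval (G' \<mu>) (Z t) (Y t) - ps_eval (G' \<mu>) z \<zeta>)) + (\<Sum>\<mu>=3..\<nu>. \<Delta> \<mu> * ?t ^ \<mu>)"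
      unfolding sum_subtractf[symmetric] sum.distrib[symmetric] by (rule sum.cong) (auto simp: \<Delta>_def algebra_simps)
    have E2': "E2 t = (\<Sum>\<mu>=3..\<nu>. ?t ^ \<mu> * (ps_eval (G' \<mu>) (Z t) (Y t) - ps_eval (G' \<mu>) z \<zeta>)) / ?t ^ \<nu>"
      unfolding E2_def by (simp add: sum_divide_distrib)
    have E1': "E1 t = ?t^2 * (mfun (Z t) (Y t) - mfun z \<zeta> - of_real (t^(\<nu>-2)) * L) / ?t ^ \<nu>"
      unfolding E1_def tn using t0 by (simp add: field_simps)
    show ?thesis
      unfolding Pd E1' E2' E3_def E4_def c0_def
      by (rule alg_main[OF _ tn eq2 sumid]) (use t0 in simp)
  qed
  have lE1: "(E1 \<longlongrightarrow> 0) (at_right 0)"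
  proof -
    have "filterlim (\<lambda>t::real. t^(\<nu>-2)) (at_right 0) (at_right 0)"
    proof (rule tendsto_imp_filterlim_at_right)
      have "((\<lambda>t::real. t^(\<nu>-2)) \<longlongrightarrow> 0^(\<nu>-2)) (at_right 0)" by (intro tendsto_intros)
      then show "((\<lambda>t::real. t^(\<nu>-2)) \<longlongrightarrow> 0) (at_right 0)" using nu by simp
      show "eventually (\<lambda>t::real. t^(\<nu>-2) > 0) (at_right 0)"
        by (rule eventually_mono[OF eventually_at_right_less]) simp
    qed
    from filterlim_compose[OF mfun_deriv[OF hD, of z "f z \<zeta>" "g z \<zeta>"] this]
    show ?thesis unfolding E1_def Z_def Y_def L_def X_def by simp
  qed
  have lE2: "(E2 \<longlongrightarrow> 0) (at_right 0)"
    unfolding E2_def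
  proof (rule tendsto_null_sum)
    fix \<mu> assume \<mu>: "\<mu> \<in> {3..\<nu>}"
    obtain K where K: "\<And>t. 0 < t \<Longrightarrow> t \<le> 1 \<Longrightarrow> cmod (ps_eval (G' \<mu>) (Z t) (Y t) - ps_eval (G' \<mu>) z \<zeta>) \<le> K * t^(\<nu>-2)"
      using hLip \<mu> by blast
    show "((\<lambda>t. of_real t ^ \<mu> * (ps_eval (G' \<mu>) (Z t) (Y t) - ps_eval (G' \<mu>) z \<zeta>) / of_real t ^ \<nu>) \<longlongrightarrow> 0) (at_right 0)"
    proof (rule null_bound)
      fix t :: real assume t: "0 < t" "t \<le> 1"
      have K0': "0 \<le> K * t^(\<nu>-2)" by (rule order_trans[OF norm_ge_zero K[OF t]])
      have "t^(\<nu>-2) > 0" using t by simp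
      then have K0: "K \<ge> 0" using K0' by (simp add: zero_le_mult_iff)
      have ee: "\<mu> + (\<nu>-2) = \<nu> + (\<mu>-2)" using \<mu> nu by auto
      have e1: "t^\<mu> * t^(\<nu>-2) = t^\<nu> * t^(\<mu>-2)" by (simp only: power_add[symmetric] ee)
      have "norm (of_real t ^ \<mu> * (ps_eval (G' \<mu>) (Z t) (Y t) - ps_eval (G' \<mu>) z \<zeta>) / of_real t ^ \<nu>)
          = t^\<mu> * cmod (ps_eval (G' \<mu>) (Z t) (Y t) - ps_eval (G' \<mu>) z \<zeta>) / t^\<nu>"
        using t by (simp add: norm_mult norm_divide norm_power)
      also have "\<dots> \<le> t^\<mu> * (K * t^(\<nu>-2)) / t^\<nu>"
        using t K[OF t] by (intro divide_right_mono mult_left_mono) auto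
      also have "\<dots> = K * t^(\<mu>-2)" using t e1 by (simp add: field_simps)
      also have "\<dots> \<le> K * t" using t \<mu> K0 by (intro mult_left_mono) (auto simp: power_le_one power_decreasing[of 1 "\<mu>-2" t, simplified])
      finally show "norm (of_real t ^ \<mu> * (ps_eval (G' \<mu>) (Z t) (Y t) - ps_eval (G' \<mu>) z \<zeta>) / of_real t ^ \<nu>) \<le> K * t" .
    qed
  qed
  have lE3: "(E3 \<longlongrightarrow> 0) (at_right 0)"
  proof -
    obtain S where S: "\<And>t. 0 < t \<Longrightarrow> t \<le> 1 \<Longrightarrow> cmod (ps_eval R' (of_real t * Z t) (Y t)) \<le> S * t^(\<nu>+1)"
      using hR' by blast
    show ?thesis unfolding E3_def
    proof (rule null_bound)
      fix t :: real assume t: "0 < t" "t \<le> 1"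
      have "norm (ps_eval R' (of_real t * Z t) (Y t) / of_real t ^ \<nu>) = cmod (ps_eval R' (of_real t * Z t) (Y t)) / t^\<nu>"
        using t by (simp add: norm_divide norm_power)
      also have "\<dots> \<le> S * t^(\<nu>+1) / t^\<nu>"
        by (rule divide_right_mono[OF S[OF t]]) (use t in simp)
      also have "\<dots> = S * t" using t by (simp add: field_simps)
      finally show "norm (ps_eval R' (of_real t * Z t) (Y t) / of_real t ^ \<nu>) \<le> S * t" .
    qed
  qed
  have lE4: "(E4 \<longlongrightarrow> 0) (at_right 0)"
  proof -
    obtain S where S: "\<And>t. 0 < t \<Longrightarrow> t \<le> 1 \<Longrightarrow> cmod (ps_eval R (of_real t * z) \<zeta>) \<le> S * t^(\<nu>+1)"
      using hR by blast
    show ?thesis unfolding E4_def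
    proof (rule null_bound)
      fix t :: real assume t: "0 < t" "t \<le> 1"
      have "norm (ps_eval R (of_real t * z) \<zeta> / of_real t ^ \<nu>) = cmod (ps_eval R (of_real t * z) \<zeta>) / t^\<nu>"
        using t by (simp add: norm_divide norm_power)
      also have "\<dots> \<le> S * t^(\<nu>+1) / t^\<nu>"
        by (rule divide_right_mono[OF S[OF t]]) (use t in simp)
      also have "\<dots> = S * t" using t by (simp add: field_simps)
      finally show "norm (ps_eval R (of_real t * z) \<zeta> / of_real t ^ \<nu>) \<le> S * t" .
    qed
  qed
  have "((\<lambda>t. - (E1 t + E2 t + E3 t - E4 t)) \<longlongrightarrow> - (0 + 0 + 0 - 0)) (at_right 0)"
    by (intro tendsto_intros lE1 lE2 lE3 lE4)
  then have "((\<lambda>t. - (E1 t + E2 t + E3 t - E4 t)) \<longlongrightarrow> 0) (at_right 0)" by simp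
  then have "((\<lambda>t. (\<Sum>k\<le>\<nu>. d k * of_real t ^ k) / of_real t ^ \<nu>) \<longlongrightarrow> 0) (at_right 0)"
  proof (rule Lim_transform_eventually)
    have "eventually (\<lambda>t::real. 0 < t \<and> t < 1) (at_right 0)"
      by (simp add: eventually_at_right_field) (intro exI[of _ 1], auto)
    then show "eventually (\<lambda>t. - (E1 t + E2 t + E3 t - E4 t) = (\<Sum>k\<le>\<nu>. d k * of_real t ^ k) / of_real t ^ \<nu>) (at_right 0)"
      by (rule eventually_mono) (use main in auto)
  qed
  from poly_small_zero[OF this] have dz: "\<forall>k\<le>\<nu>. d k = 0" .
  have p1: "\<forall>\<mu>\<in>{3..\<nu>-1}. ps_eval (G' \<mu>) z \<zeta> = ps_eval (G \<mu>) z \<zeta>"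
  proof
    fix \<mu> assume \<mu>: "\<mu> \<in> {3..\<nu>-1}"
    then have "d \<mu> = \<Delta> \<mu>" using nu by (auto simp: d_def)
    then show "ps_eval (G' \<mu>) z \<zeta> = ps_eval (G \<mu>) z \<zeta>" using dz \<mu> by (auto simp: \<Delta>_def)
  qed
  have "d \<nu> = \<Delta> \<nu> + c0" using nu by (simp add: d_def)
  then have "\<Delta> \<nu> + c0 = 0" using dz by simp
  moreover have "c0 = complex_of_real (2 * Re (X - h z \<zeta> / 2))"
    unfolding c0_def L_def by simp
  ultimately show ?thesis using p1 unfolding \<Delta>_def X_def by (simp add: algebra_simps)
qed

lemma ps_eval_00:
  assumes "c 0 0 0 0 = 0"
  shows "ps_eval c 0 0 = 0"
proof -
  have "ps_term c 0 0 k = 0" for k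
  proof (cases k)
    case (fields a b p q)
    then show ?thesis using assms
      by (cases "a = 0"; cases "b = 0"; cases "p = 0"; cases "q = 0") (auto simp: ps_term_def)
  qed
  then have "ps_term c 0 0 = (\<lambda>k. 0)" by (rule ext)
  then show ?thesis unfolding ps_eval_def by simp
qed

lemma ps_tendsto0:
  assumes conv: "ps_convergent c" and c0: "c 0 0 0 0 = 0"
  shows "((\<lambda>p. ps_eval c (fst p) (snd p)) \<longlongrightarrow> 0) (nhds (0, 0))"
proof -
  obtain \<rho> K where \<rho>: "\<rho> > 0" and lip: "\<And>x1 y1 x2 y2. cmod x1 \<le> \<rho> \<Longrightarrow> cmod y1 \<le> \<rho> \<Longrightarrow> cmod x2 \<le> \<rho> \<Longrightarrow> cmod y2 \<le> \<rho> \<Longrightarrow>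
      cmod (ps_eval c x1 y1 - ps_eval c x2 y2) \<le> K * (cmod (x1 - x2) + cmod (y1 - y2))"
    using ps_lip[OF conv] by blast
  show ?thesis
  proof (rule Lim_null_comparison)
    show "eventually (\<lambda>p. norm (ps_eval c (fst p) (snd p)) \<le> K * (cmod (fst p) + cmod (snd p))) (nhds (0, 0))"
    proof (rule box_ev[OF \<rho>])
      fix x y :: complex assume "cmod x < \<rho>" "cmod y < \<rho>"
      then show "norm (ps_eval c (fst (x, y)) (snd (x, y))) \<le> K * (cmod (fst (x, y)) + cmod (snd (x, y)))"
        using lip[of x y 0 0] \<rho> ps_eval_00[of c, OF c0] by simp
    qed
    have "((\<lambda>p::complex\<times>complex. K * (cmod (fst p) + cmod (snd p))) \<longlongrightarrow> K * (cmod (fst (0::complex,0::complex)) + cmod (snd (0::complex,0::complex)))) (nhds (0, 0))"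
      by (intro tendsto_intros) (auto intro: filterlim_ident)
    then show "((\<lambda>p::complex\<times>complex. K * (cmod (fst p) + cmod (snd p))) \<longlongrightarrow> 0) (nhds (0, 0))" by simp
  qed
qed

lemma holo_tendsto0:
  assumes "wt_hom_holo k f" "k \<ge> 1"
  shows "((\<lambda>p. f (fst p) (snd p)) \<longlongrightarrow> 0) (nhds (0, 0))"
proof -
  obtain \<phi> where \<phi>: "\<phi> analytic_on {0}" "\<And>z \<zeta>. f z \<zeta> = z ^ k * \<phi> \<zeta>"
    using assms(1) unfolding wt_hom_holo_def by blast
  have c: "isCont \<phi> 0" by (rule analytic_at_imp_isCont[OF \<phi>(1)])
  have "((\<lambda>p::complex\<times>complex. fst p ^ k * \<phi> (snd p)) \<longlongrightarrow> fst (0::complex,0::complex) ^ k * \<phi> (snd (0::complex,0::complex))) (nhds (0, 0))"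
    by (intro tendsto_intros isCont_tendsto_compose[OF _ tendsto_snd]) (use c in \<open>auto intro: filterlim_ident\<close>)
  moreover have "(0::complex) ^ k = 0" using assms(2) by simp
  ultimately show ?thesis by (simp add: \<phi>(2))
qed

lemma mfun_tendsto0: "((\<lambda>p. mfun (fst p) (snd p)) \<longlongrightarrow> 0) (nhds (0, 0))"
proof -
  have "((\<lambda>p::complex\<times>complex. mfun (fst p) (snd p)) \<longlongrightarrow> mfun (fst (0::complex,0::complex)) (snd (0::complex,0::complex))) (nhds (0, 0))"
    unfolding mfun_def by (intro tendsto_intros) (auto intro: filterlim_ident)
  then show ?thesis by (simp add: mfun_def)
qed

lemma ps_diff:
  assumes "ps_convergent c1" "ps_convergent c2"
  shows "ps_convergent (\<lambda>a b p q. c1 a b p q - c2 a b p q) \<and>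
    (\<exists>r>0. \<forall>x y. cmod x < r \<longrightarrow> cmod y < r \<longrightarrow> ps_eval (\<lambda>a b p q. c1 a b p q - c2 a b p q) x y = ps_eval c1 x y - ps_eval c2 x y)"
proof -
  obtain r1 where r1: "r1 > 0" "\<And>x y. cmod x < r1 \<Longrightarrow> cmod y < r1 \<Longrightarrow> (\<lambda>k. norm (ps_term c1 x y k)) summable_on UNIV"
    using assms(1) unfolding ps_convergent_def by blast
  obtain r2 where r2: "r2 > 0" "\<And>x y. cmod x < r2 \<Longrightarrow> cmod y < r2 \<Longrightarrow> (\<lambda>k. norm (ps_term c2 x y k)) summable_on UNIV"
    using assms(2) unfolding ps_convergent_def by blast
  define r where "r = min r1 r2"
  have r: "r > 0" using r1 r2 by (simp add: r_def)
  have tdiff: "ps_term (\<lambda>a b p q. c1 a b p q - c2 a b p q) x y k = ps_term c1 x y k - ps_term c2 x y k" for x y k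
    by (cases k) (simp add: ps_term_def algebra_simps)
  have sm: "(\<lambda>k. norm (ps_term (\<lambda>a b p q. c1 a b p q - c2 a b p q) x y k)) summable_on UNIV \<and>
        ps_eval (\<lambda>a b p q. c1 a b p q - c2 a b p q) x y = ps_eval c1 x y - ps_eval c2 x y"
    if "cmod x < r" "cmod y < r" for x y
  proof
    have s1: "(\<lambda>k. norm (ps_term c1 x y k)) summable_on UNIV" using r1(2) that by (simp add: r_def)
    have s2: "(\<lambda>k. norm (ps_term c2 x y k)) summable_on UNIV" using r2(2) that by (simp add: r_def)
    show "(\<lambda>k. norm (ps_term (\<lambda>a b p q. c1 a b p q - c2 a b p q) x y k)) summable_on UNIV"
      unfolding tdiff
      by (rule Infinite_Sum.abs_summable_on_comparison_test'[OF summable_on_add[OF s1 s2]]) (simp add: norm_triangle_ineq4)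
    show "ps_eval (\<lambda>a b p q. c1 a b p q - c2 a b p q) x y = ps_eval c1 x y - ps_eval c2 x y"
      unfolding ps_eval_def tdiff by (rule infsum_diff'[OF ps_summable[OF s1] ps_summable[OF s2]])
  qed
  show ?thesis using r sm unfolding ps_convergent_def by blast
qed

theorem proposition6p2:
  fixes \<nu> :: nat
    and F F' :: "complex \<Rightarrow> complex \<Rightarrow> real"
    and G G' :: "nat \<Rightarrow> coeffs4"
    and R R' :: coeffs4
    and f g h :: "complex \<Rightarrow> complex \<Rightarrow> complex"
  assumes "\<nu> \<ge> 3"
    and "rigid_expansion \<nu> F G R"
    and "rigid_expansion \<nu> F' G' R'"
    and "wt_hom_holo (\<nu> - 1) f"
    and "wt_hom_holo (\<nu> - 2) g"
    and "wt_hom_holo \<nu> h"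
    and maps: "\<forall>\<^sub>F (z, \<zeta>, w) in nhds (0, 0, 0).
               Re w = F z \<zeta> \<longrightarrow> Re (w + h z \<zeta>) = F' (z + f z \<zeta>) (\<zeta> + g z \<zeta>)"
  shows "(\<forall>\<mu>\<in>{3..\<nu>-1}. G' \<mu> = G \<mu>) \<and>
         (\<forall>\<^sub>F (z, \<zeta>) in nhds (0, 0).
            ps_eval (G' \<nu>) z \<zeta> = ps_eval (G \<nu>) z \<zeta>
              - complex_of_real (2 * Re (
                  (cnj z + z * cnj \<zeta>) / (1 - \<zeta> * cnj \<zeta>) * f z \<zeta>
                + (cnj z + z * cnj \<zeta>)^2 / (2 * (1 - \<zeta> * cnj \<zeta>)^2) * g z \<zeta>
                - h z \<zeta> / 2)))"
proof -
  note nu = assms(1)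
  from assms(2) have hG: "\<forall>\<mu>\<in>{3..\<nu>}. wt_hom \<mu> (G \<mu>) \<and> ps_convergent (G \<mu>)" and hRw: "wt_ge (\<nu>+1) R"
    and hRc: "ps_convergent R"
    and evF: "\<forall>\<^sub>F (z, \<zeta>) in nhds (0, 0). complex_of_real (F z \<zeta>) = mfun z \<zeta> + (\<Sum>\<mu>=3..\<nu>. ps_eval (G \<mu>) z \<zeta>) + ps_eval R z \<zeta>"
    unfolding rigid_expansion_def by blast+
  from assms(3) have hG': "\<forall>\<mu>\<in>{3..\<nu>}. wt_hom \<mu> (G' \<mu>) \<and> ps_convergent (G' \<mu>)" and hRw': "wt_ge (\<nu>+1) R'"
    and hRc': "ps_convergent R'"
    and evF': "\<forall>\<^sub>F (z, \<zeta>) in nhds (0, 0). complex_of_real (F' z \<zeta>) = mfun z \<zeta> + (\<Sum>\<mu>=3..\<nu>. ps_eval (G' \<mu>) z \<zeta>) + ps_eval R' z \<zeta>"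
    unfolding rigid_expansion_def by blast+
  obtain \<phi>f where \<phi>f: "\<And>z \<zeta>. f z \<zeta> = z ^ (\<nu>-1) * \<phi>f \<zeta>" using assms(4) unfolding wt_hom_holo_def by blast
  obtain \<phi>g where \<phi>g: "\<And>z \<zeta>. g z \<zeta> = z ^ (\<nu>-2) * \<phi>g \<zeta>" using assms(5) unfolding wt_hom_holo_def by blast
  obtain \<phi>h where \<phi>h: "\<And>z \<zeta>. h z \<zeta> = z ^ \<nu> * \<phi>h \<zeta>" using assms(6) unfolding wt_hom_holo_def by blast
  have fs: "f (of_real t * z) \<zeta> = of_real t ^ (\<nu>-1) * f z \<zeta>" for t z \<zeta> by (simp add: \<phi>f power_mult_distrib)
  have gs: "g (of_real t * z) \<zeta> = of_real t ^ (\<nu>-2) * g z \<zeta>" for t z \<zeta> by (simp add: \<phi>g power_mult_distrib)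
  have hs: "h (of_real t * z) \<zeta> = of_real t ^ \<nu> * h z \<zeta>" for t z \<zeta> by (simp add: \<phi>h power_mult_distrib)
  have homG: "\<forall>\<mu>\<in>{3..\<nu>}. wt_hom \<mu> (G \<mu>)" and homG': "\<forall>\<mu>\<in>{3..\<nu>}. wt_hom \<mu> (G' \<mu>)" using hG hG' by auto

  obtain \<delta>1 where \<delta>1: "\<delta>1 > 0" "\<And>x y. cmod x < \<delta>1 \<Longrightarrow> cmod y < \<delta>1 \<Longrightarrow>
      complex_of_real (F x y) = mfun x y + (\<Sum>\<mu>=3..\<nu>. ps_eval (G \<mu>) x y) + ps_eval R x y"
    using ev_box[OF evF] by auto
  obtain \<delta>2 where \<delta>2: "\<delta>2 > 0" "\<And>x y. cmod x < \<delta>2 \<Longrightarrow> cmod y < \<delta>2 \<Longrightarrow>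
      complex_of_real (F' x y) = mfun x y + (\<Sum>\<mu>=3..\<nu>. ps_eval (G' \<mu>) x y) + ps_eval R' x y"
    using ev_box[OF evF'] by auto
  obtain \<delta>3 where \<delta>3: "\<delta>3 > 0" "\<And>x y w. cmod x < \<delta>3 \<Longrightarrow> cmod y < \<delta>3 \<Longrightarrow> cmod w < \<delta>3 \<Longrightarrow>
      Re w = F x y \<Longrightarrow> Re (w + h x y) = F' (x + f x y) (y + g x y)"
    using ev_box3[OF maps] by auto

  have G00: "G \<mu> 0 0 0 0 = 0" if "\<mu> \<in> {3..\<nu>}" for \<mu>
    using homG that unfolding wt_hom_def by fastforce
  have R00: "R 0 0 0 0 = 0" using hRw unfolding wt_ge_def by fastforce
  have "((\<lambda>p. mfun (fst p) (snd p) + (\<Sum>\<mu>=3..\<nu>. ps_eval (G \<mu>) (fst p) (snd p)) + ps_eval R (fst p) (snd p)) \<longlongrightarrow> 0 + 0 + 0) (nhds (0,0))"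
    by (intro tendsto_add mfun_tendsto0 tendsto_null_sum ps_tendsto0 hRc R00) (use hG G00 in auto)
  then have "((\<lambda>p. mfun (fst p) (snd p) + (\<Sum>\<mu>=3..\<nu>. ps_eval (G \<mu>) (fst p) (snd p)) + ps_eval R (fst p) (snd p)) \<longlongrightarrow> 0) (nhds (0,0))"
    by simp
  then have "((\<lambda>p. complex_of_real (F (fst p) (snd p))) \<longlongrightarrow> 0) (nhds (0,0))"
    by (rule Lim_transform_eventually) (rule eventually_mono[OF evF], auto simp: case_prod_beta)
  then have evd: "eventually (\<lambda>p. dist (complex_of_real (F (fst p) (snd p))) 0 < \<delta>3) (nhds (0,0))"
    by (rule tendstoD) (rule \<delta>3(1))
  obtain \<delta>4 where \<delta>4': "\<delta>4 > 0" "\<And>x y. cmod x < \<delta>4 \<Longrightarrow> cmod y < \<delta>4 \<Longrightarrow> dist (complex_of_real (F x y)) 0 < \<delta>3"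
    using ev_box[OF evd] by auto
  have \<delta>4: "\<delta>4 > 0" "\<And>x y. cmod x < \<delta>4 \<Longrightarrow> cmod y < \<delta>4 \<Longrightarrow> \<bar>F x y\<bar> < \<delta>3"
    using \<delta>4' by auto

  obtain rR where rR: "rR > 0" "\<And>x y. cmod x < rR \<Longrightarrow> cmod y < rR \<Longrightarrow> (\<lambda>k. norm (ps_term R x y k)) summable_on UNIV"
    using hRc unfolding ps_convergent_def by blast
  define \<rho>R where "\<rho>R = rR / 2"
  have \<rho>R: "\<rho>R > 0" "(\<lambda>k. norm (ps_term R (of_real \<rho>R) (of_real \<rho>R) k)) summable_on UNIV"
    using rR by (auto simp: \<rho>R_def)
  obtain rR' where rR': "rR' > 0" "\<And>x y. cmod x < rR' \<Longrightarrow> cmod y < rR' \<Longrightarrow> (\<lambda>k. norm (ps_term R' x y k)) summable_on UNIV"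
    using hRc' unfolding ps_convergent_def by blast
  define \<rho>R' where "\<rho>R' = rR' / 2"
  have \<rho>R': "\<rho>R' > 0" "(\<lambda>k. norm (ps_term R' (of_real \<rho>R') (of_real \<rho>R') k)) summable_on UNIV"
    using rR' by (auto simp: \<rho>R'_def)

  have evsmall: "eventually (\<lambda>p. cmod (fst p) + cmod (f (fst p) (snd p)) < \<epsilon> \<and> cmod (snd p) + cmod (g (fst p) (snd p)) < \<epsilon>) (nhds (0,0))"
    if "\<epsilon> > 0" for \<epsilon>
  proof -
    have fst0: "((\<lambda>p::complex\<times>complex. fst p) \<longlongrightarrow> 0) (nhds (0,0))"
      using tendsto_fst[OF filterlim_ident, of "(0::complex,0::complex)"] by simp
    have snd0: "((\<lambda>p::complex\<times>complex. snd p) \<longlongrightarrow> 0) (nhds (0,0))"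
      using tendsto_snd[OF filterlim_ident, of "(0::complex,0::complex)"] by simp
    have "((\<lambda>p. cmod (fst p) + cmod (f (fst p) (snd p))) \<longlongrightarrow> 0 + 0) (nhds (0,0))"
      by (intro tendsto_add tendsto_norm_zero fst0 holo_tendsto0[OF assms(4)]) (use nu in simp)
    then have a: "eventually (\<lambda>p. cmod (fst p) + cmod (f (fst p) (snd p)) < \<epsilon>) (nhds (0,0))"
      using order_tendstoD(2) that by fastforce
    have "((\<lambda>p. cmod (snd p) + cmod (g (fst p) (snd p))) \<longlongrightarrow> 0 + 0) (nhds (0,0))"
      by (intro tendsto_add tendsto_norm_zero snd0 holo_tendsto0[OF assms(5)]) (use nu in simp)
    then have b: "eventually (\<lambda>p. cmod (snd p) + cmod (g (fst p) (snd p)) < \<epsilon>) (nhds (0,0))"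
      using order_tendstoD(2) that by fastforce
    show ?thesis using eventually_conj[OF a b] .
  qed

  have Zb: "cmod (z + of_real (t^(\<nu>-2)) * a) \<le> cmod z + cmod a" if "0 < t" "t \<le> 1" for z a :: complex and t :: real
  proof -
    have "cmod (z + of_real (t^(\<nu>-2)) * a) \<le> cmod z + t^(\<nu>-2) * cmod a"
      using norm_triangle_ineq[of z "of_real (t^(\<nu>-2)) * a"] that by (simp add: norm_mult norm_power)
    also have "\<dots> \<le> cmod z + cmod a" using that by (simp add: mult_left_le_one_le power_le_one)
    finally show ?thesis .
  qed
  have tb: "cmod (of_real t * z) \<le> cmod z" if "0 < t" "t \<le> 1" for z :: complex and t :: real
    using that by (simp add: norm_mult mult_left_le_one_le)

  define LipC where "LipC z \<zeta> \<longleftrightarrow> (\<forall>\<mu>\<in>{3..\<nu>}. \<exists>K. \<forall>t. 0 < t \<longrightarrow> t \<le> 1 \<longrightarrow>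
       cmod (ps_eval (G' \<mu>) (z + of_real (t^(\<nu>-2)) * f z \<zeta>) (\<zeta> + of_real (t^(\<nu>-2)) * g z \<zeta>) - ps_eval (G' \<mu>) z \<zeta>) \<le> K * t^(\<nu>-2))" for z \<zeta>
  have evL: "eventually (\<lambda>p. LipC (fst p) (snd p)) (nhds (0,0))"
    unfolding LipC_def
  proof (rule eventually_ball_finite, simp, rule ballI)
    fix \<mu> assume \<mu>: "\<mu> \<in> {3..\<nu>}"
    obtain \<rho> K where \<rho>: "\<rho> > 0" and lip: "\<And>x1 y1 x2 y2. cmod x1 \<le> \<rho> \<Longrightarrow> cmod y1 \<le> \<rho> \<Longrightarrow> cmod x2 \<le> \<rho> \<Longrightarrow> cmod y2 \<le> \<rho> \<Longrightarrow>
      cmod (ps_eval (G' \<mu>) x1 y1 - ps_eval (G' \<mu>) x2 y2) \<le> K * (cmod (x1 - x2) + cmod (y1 - y2))"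
      using ps_lip[of "G' \<mu>"] hG' \<mu> by blast
    show "eventually (\<lambda>p. \<exists>K. \<forall>t. 0 < t \<longrightarrow> t \<le> 1 \<longrightarrow>
       cmod (ps_eval (G' \<mu>) (fst p + of_real (t^(\<nu>-2)) * f (fst p) (snd p)) (snd p + of_real (t^(\<nu>-2)) * g (fst p) (snd p)) - ps_eval (G' \<mu>) (fst p) (snd p)) \<le> K * t^(\<nu>-2)) (nhds (0,0))"
    proof (rule eventually_mono[OF evsmall[OF \<rho>]])
      fix p :: "complex \<times> complex"
      assume p: "cmod (fst p) + cmod (f (fst p) (snd p)) < \<rho> \<and> cmod (snd p) + cmod (g (fst p) (snd p)) < \<rho>"
      define z where "z = fst p" define \<zeta> where "\<zeta> = snd p"
      have p': "cmod z + cmod (f z \<zeta>) < \<rho>" "cmod \<zeta> + cmod (g z \<zeta>) < \<rho>" using p by (auto simp: z_def \<zeta>_def)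
      have "\<forall>t. 0 < t \<longrightarrow> t \<le> 1 \<longrightarrow>
       cmod (ps_eval (G' \<mu>) (z + of_real (t^(\<nu>-2)) * f z \<zeta>) (\<zeta> + of_real (t^(\<nu>-2)) * g z \<zeta>) - ps_eval (G' \<mu>) z \<zeta>) \<le> (K * (cmod (f z \<zeta>) + cmod (g z \<zeta>))) * t^(\<nu>-2)"
      proof (intro allI impI)
        fix t :: real assume t: "0 < t" "t \<le> 1"
        have "cmod (ps_eval (G' \<mu>) (z + of_real (t^(\<nu>-2)) * f z \<zeta>) (\<zeta> + of_real (t^(\<nu>-2)) * g z \<zeta>) - ps_eval (G' \<mu>) z \<zeta>)
            \<le> K * (cmod (z + of_real (t^(\<nu>-2)) * f z \<zeta> - z) + cmod (\<zeta> + of_real (t^(\<nu>-2)) * g z \<zeta> - \<zeta>))"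
          apply (rule lip)
          using Zb[OF t, of z "f z \<zeta>"] Zb[OF t, of \<zeta> "g z \<zeta>"] p' norm_ge_zero[of "f z \<zeta>"] norm_ge_zero[of "g z \<zeta>"] by linarith+
        also have "\<dots> = (K * (cmod (f z \<zeta>) + cmod (g z \<zeta>))) * t^(\<nu>-2)"
          using t by (simp add: norm_mult norm_power algebra_simps)
        finally show "cmod (ps_eval (G' \<mu>) (z + of_real (t^(\<nu>-2)) * f z \<zeta>) (\<zeta> + of_real (t^(\<nu>-2)) * g z \<zeta>) - ps_eval (G' \<mu>) z \<zeta>) \<le> (K * (cmod (f z \<zeta>) + cmod (g z \<zeta>))) * t^(\<nu>-2)" .
      qed
      then show "\<exists>K. \<forall>t. 0 < t \<longrightarrow> t \<le> 1 \<longrightarrow>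
       cmod (ps_eval (G' \<mu>) (fst p + of_real (t^(\<nu>-2)) * f (fst p) (snd p)) (snd p + of_real (t^(\<nu>-2)) * g (fst p) (snd p)) - ps_eval (G' \<mu>) (fst p) (snd p)) \<le> K * t^(\<nu>-2)"
        unfolding z_def \<zeta>_def by blast
    qed
  qed

  define \<Delta> where "\<Delta> = min (min (min \<delta>1 \<delta>2) (min \<delta>3 \<delta>4)) (min (min \<rho>R \<rho>R') 1)"
  have \<Delta>: "\<Delta> > 0" using \<delta>1 \<delta>2 \<delta>3 \<delta>4 \<rho>R \<rho>R' by (simp add: \<Delta>_def)

  define Conc where "Conc z \<zeta> \<longleftrightarrow> (\<forall>\<mu>\<in>{3..\<nu>-1}. ps_eval (G' \<mu>) z \<zeta> = ps_eval (G \<mu>) z \<zeta>) \<and>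
         ps_eval (G' \<nu>) z \<zeta> = ps_eval (G \<nu>) z \<zeta>
              - complex_of_real (2 * Re (
                  (cnj z + z * cnj \<zeta>) / (1 - \<zeta> * cnj \<zeta>) * f z \<zeta>
                + (cnj z + z * cnj \<zeta>)^2 / (2 * (1 - \<zeta> * cnj \<zeta>)^2) * g z \<zeta>
                - h z \<zeta> / 2))" for z \<zeta>
  have key: "Conc z \<zeta>"
    if C: "cmod z + cmod (f z \<zeta>) < \<Delta>" "cmod \<zeta> + cmod (g z \<zeta>) < \<Delta>" and L: "LipC z \<zeta>" for z \<zeta>
  proof -
    define Z where "Z = (\<lambda>t::real. z + of_real (t^(\<nu>-2)) * f z \<zeta>)"
    define Y where "Y = (\<lambda>t::real. \<zeta> + of_real (t^(\<nu>-2)) * g z \<zeta>)"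
    have zs: "cmod z < \<Delta>" "cmod \<zeta> < \<Delta>" using C norm_ge_zero[of "f z \<zeta>"] norm_ge_zero[of "g z \<zeta>"] by linarith+
    have ZY: "cmod (Z t) < \<Delta>" "cmod (Y t) < \<Delta>" if "0 < t" "t \<le> 1" for t
      using Zb[OF that, of z "f z \<zeta>"] Zb[OF that, of \<zeta> "g z \<zeta>"] C unfolding Z_def Y_def by linarith+
    have hF: "complex_of_real (F (of_real t * z) \<zeta>) = mfun (of_real t * z) \<zeta>
               + (\<Sum>\<mu>=3..\<nu>. ps_eval (G \<mu>) (of_real t * z) \<zeta>) + ps_eval R (of_real t * z) \<zeta>" if t: "0 < t" "t \<le> 1" for t
      by (rule \<delta>1(2)) (use tb[OF t, of z] zs in \<open>auto simp: \<Delta>_def\<close>)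
    have hF': "complex_of_real (F' (of_real t * Z t) (Y t)) = mfun (of_real t * Z t) (Y t)
               + (\<Sum>\<mu>=3..\<nu>. ps_eval (G' \<mu>) (of_real t * Z t) (Y t)) + ps_eval R' (of_real t * Z t) (Y t)" if t: "0 < t" "t \<le> 1" for t
      by (rule \<delta>2(2)) (use tb[OF t, of "Z t"] ZY[OF t] in \<open>auto simp: \<Delta>_def\<close>)
    have hmap: "F (of_real t * z) \<zeta> + Re (h (of_real t * z) \<zeta>)
               = F' (of_real t * z + f (of_real t * z) \<zeta>) (\<zeta> + g (of_real t * z) \<zeta>)" if t: "0 < t" "t \<le> 1" for t
    proof -
      have a: "cmod (of_real t * z) < \<delta>3" "cmod \<zeta> < \<delta>3" "cmod (of_real t * z) < \<delta>4" "cmod \<zeta> < \<delta>4"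
        using tb[OF t, of z] zs by (auto simp: \<Delta>_def)
      have "cmod (complex_of_real (F (of_real t * z) \<zeta>)) < \<delta>3" using \<delta>4(2)[OF a(3,4)] by simp
      from \<delta>3(2)[OF a(1,2) this] show ?thesis by simp
    qed
    have hLip: "\<forall>\<mu>\<in>{3..\<nu>}. \<exists>K. \<forall>t. 0 < t \<longrightarrow> t \<le> 1 \<longrightarrow>
               cmod (ps_eval (G' \<mu>) (Z t) (Y t) - ps_eval (G' \<mu>) z \<zeta>) \<le> K * t^(\<nu>-2)"
      using L unfolding LipC_def Z_def Y_def .
    have hR: "\<exists>S. \<forall>t. 0 < t \<longrightarrow> t \<le> 1 \<longrightarrow> cmod (ps_eval R (of_real t * z) \<zeta>) \<le> S * t^(\<nu>+1)"
    proof (intro exI allI impI)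
      fix t :: real assume t: "0 < t" "t \<le> 1"
      have "cmod z \<le> \<rho>R" "cmod \<zeta> \<le> \<rho>R" using zs by (auto simp: \<Delta>_def)
      from ps_ge_bound[OF hRw \<rho>R(2) this] t
      show "cmod (ps_eval R (of_real t * z) \<zeta>) \<le> (\<Sum>\<^sub>\<infinity>k. norm (ps_term R (of_real \<rho>R) (of_real \<rho>R) k)) * t^(\<nu>+1)"
        by (simp add: mult.commute)
    qed
    have hR': "\<exists>S. \<forall>t. 0 < t \<longrightarrow> t \<le> 1 \<longrightarrow> cmod (ps_eval R' (of_real t * Z t) (Y t)) \<le> S * t^(\<nu>+1)"
    proof (intro exI allI impI)
      fix t :: real assume t: "0 < t" "t \<le> 1"
      have "cmod (Z t) \<le> \<rho>R'" "cmod (Y t) \<le> \<rho>R'" using ZY[OF t] by (auto simp: \<Delta>_def)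
      from ps_ge_bound[OF hRw' \<rho>R'(2) this] t
      show "cmod (ps_eval R' (of_real t * Z t) (Y t)) \<le> (\<Sum>\<^sub>\<infinity>k. norm (ps_term R' (of_real \<rho>R') (of_real \<rho>R') k)) * t^(\<nu>+1)"
        by (simp add: mult.commute)
    qed
    have hD: "1 - \<zeta> * cnj \<zeta> \<noteq> 0"
    proof
      assume "1 - \<zeta> * cnj \<zeta> = 0"
      then have "complex_of_real ((cmod \<zeta>)^2) = 1" using complex_norm_square[of \<zeta>] by simp
      then have "(cmod \<zeta>)^2 = 1" using of_real_eq_1_iff by blast
      moreover have "cmod \<zeta> < 1" using zs by (auto simp: \<Delta>_def)
      then have "(cmod \<zeta>)^2 < 1^2" by (intro power_strict_mono) auto
      ultimately show False by simp
    qed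
    show ?thesis unfolding Conc_def
      by (rule core[where \<nu>=\<nu> and z=z and \<zeta>=\<zeta> and F=F and F'=F' and G=G and G'=G' and R=R and R'=R' and f=f and g=g and h=h, OF nu homG homG' fs gs hs hF hF'[unfolded Z_def Y_def] hmap hLip[unfolded Z_def Y_def] hR hR'[unfolded Z_def Y_def] hD])
  qed

  have evK: "eventually (\<lambda>p. Conc (fst p) (snd p)) (nhds (0,0))"
    by (rule eventually_mono[OF eventually_conj[OF evsmall[OF \<Delta>] evL]]) (rule key; auto)
  have part1: "G' \<mu> = G \<mu>" if \<mu>: "\<mu> \<in> {3..\<nu>-1}" for \<mu>
  proof -
    have \<mu>': "\<mu> \<in> {3..\<nu>}" using \<mu> by auto
    have ev5: "eventually (\<lambda>p. ps_eval (G' \<mu>) (fst p) (snd p) = ps_eval (G \<mu>) (fst p) (snd p)) (nhds (0, 0))"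
      by (rule eventually_mono[OF evK]) (use \<mu> in \<open>auto simp: Conc_def\<close>)
    obtain \<delta>5 where \<delta>5: "\<delta>5 > 0" "\<And>x y. cmod x < \<delta>5 \<Longrightarrow> cmod y < \<delta>5 \<Longrightarrow> ps_eval (G' \<mu>) x y = ps_eval (G \<mu>) x y"
      using ev_box[OF ev5] by auto
    have c1: "ps_convergent (G' \<mu>)" "ps_convergent (G \<mu>)" using hG hG' \<mu>' by auto
    obtain r where r: "r > 0" "\<And>x y. cmod x < r \<Longrightarrow> cmod y < r \<Longrightarrow> ps_eval (\<lambda>a b p q. G' \<mu> a b p q - G \<mu> a b p q) x y = ps_eval (G' \<mu>) x y - ps_eval (G \<mu>) x y"
      and conv: "ps_convergent (\<lambda>a b p q. G' \<mu> a b p q - G \<mu> a b p q)"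
      using ps_diff[OF c1] by blast
    have z: "ps_eval (\<lambda>a b p q. G' \<mu> a b p q - G \<mu> a b p q) x y = 0" if "cmod x < min \<delta>5 r" "cmod y < min \<delta>5 r" for x y
      using that r(2) \<delta>5(2) by simp
    have "G' \<mu> a b p q - G \<mu> a b p q = 0" for a b p q
    proof -
      have m: "min \<delta>5 r > 0" using \<delta>5(1) r(1) by simp
      show ?thesis using ps_unique[OF conv m z, of a b p q] by simp
    qed
    then show ?thesis by (intro ext) simp
  qed
  show ?thesis
  proof
    show "\<forall>\<mu>\<in>{3..\<nu>-1}. G' \<mu> = G \<mu>" using part1 by blast
    show "\<forall>\<^sub>F (z, \<zeta>) in nhds (0, 0).
            ps_eval (G' \<nu>) z \<zeta> = ps_eval (G \<nu>) z \<zeta>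
              - complex_of_real (2 * Re (
                  (cnj z + z * cnj \<zeta>) / (1 - \<zeta> * cnj \<zeta>) * f z \<zeta>
                + (cnj z + z * cnj \<zeta>)^2 / (2 * (1 - \<zeta> * cnj \<zeta>)^2) * g z \<zeta>
                - h z \<zeta> / 2))"
      by (rule eventually_mono[OF evK]) (auto simp: Conc_def case_prod_beta)
  qed
qed

end
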